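(* Under the standing setup with assumptions (A1)–(A5), for every $\epsilon>0$ and $\delta>0$ there exists $L_{\epsilon,\delta}>0$ such that: if $mF(\tau)>1$, then for all $n\ge0$ with $\mathrm P[W_n\ge L_{\epsilon,\delta}]>0$, $$\mathrm P\Big[\bigcap_{l\ge0}\Big\{\frac{W_{n+l+1}}{W_{n+l}}>mF(\tau)-\delta\Big\}\,\Big|\,W_n\ge L_{\epsilon,\delta}\Big]\ge1-\epsilon;$$ and if $m(1-F(\theta))>1$, then for all $n\ge0$ with $\mathrm P[S_n\ge L_{\epsilon,\delta}]>0$, $$\mathrm P\Big[\bigcap_{l\ge0}\Big\{\frac{S_{n+l+1}}{S_{n+l}}>m(1-F(\theta))-\delta\Big\}\,\Big|\,S_n\ge L_{\epsilon,\delta}\Big]\ge1-\epsilon.$$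
   Context: Standing setup. On a probability space $(\Omega,\mathcal F,\mathrm P)$ there are three mutually independent double arrays $(D_n^k)_{n\ge0,k\ge1}$, $(X_n^k)_{n\ge0,k\ge1}$, $(R_n^k)_{n\ge0,k\ge1}$, each consisting of i.i.d. random variables: $D_n^k\in\{0,1,2,\dots\}$ with law $p_j=\mathrm P[D_n^k=j]$ and mean $m$; $X_n^k\ge0$ real-valued with continuous distribution function $F$ and mean $\mu$; $R_n^k\ge0$ real-valued with mean $r$. Standing assumptions: (A1) $1<m<\infty$, $r<\infty$, $0<\mu<\infty$; (A2) $p_0>0$ and $p_k>0$ for some $k\ge2$; (A3) for the process under consideration started at $1$, every finite positive state is reached with positive probability; (A4) $D_n^k,X_n^k,R_n^k$ have finite variances; (A5) all $D_n^k,X_n^k,R_n^k$ are bounded, and $b$ denotes the supremum of the support of $F$. Write $D_n(k)=\sum_{j=1}^kD_n^j$, $R_n(k)=\sum_{j=1}^kR_n^j$. For $(x_k)_{k=1}^t$ let $x_{1,t}\le\dots\le x_{t,t}$ be its order statistics. $N(0,\varnothing,s)=M(0,\varnothing,s)=0$; for $t\ge1$, $N(t,(x_k)_{k=1}^t,s)=0$ if $x_{1,t}>s$, otherwise $\max\{1\le k\le t:\sum_{j=1}^kx_{j,t}\le s\}$; $M(t,(x_k)_{k=1}^t,s)=0$ if $x_{t,t}>s$, otherwise $\max\{1\le k\le t:\sum_{j=t-k+1}^tx_{j,t}\le s\}$. wf-process: $W_0=1$, $W_{n+1}=N\big(D_n(W_n),(X_n^k)_{k=1}^{D_n(W_n)},R_n(W_n)\big)$;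 sf-process: $S_0=1$, $S_{n+1}=M\big(D_n(S_n),(X_n^k)_{k=1}^{D_n(S_n)},R_n(S_n)\big)$. Ratios $Z_{n+1}/Z_n$ are set to $0$ when $Z_n=0$. If $r\le m\mu$, $\tau$ is a solution of $\int_0^\tau x\,\mathrm dF(x)=r/m$ and $\theta$ a solution of $\int_\theta^bx\,\mathrm dF(x)=r/m$; if $r>m\mu$ one sets by convention $F(\tau):=1$ and $1-F(\theta):=1$. *)

theory Defs
  imports "HOL-Probability.Probability"
begin

definition ordstat :: "nat \<Rightarrow> (nat \<Rightarrow> real) \<Rightarrow> real list" where
  "ordstat t x = sort (map x [1..<Suc t])"

text \<open>N(t,(x_k),s): how many of the smallest values fit into budget s.\<close>
definition Nsel :: "nat \<Rightarrow> (nat \<Rightarrow> real) \<Rightarrow> real \<Rightarrow> nat" where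
  "Nsel t x s = (if t = 0 then 0
     else if ordstat t x ! 0 > s then 0
     else Max {k \<in> {1..t}. sum_list (take k (ordstat t x)) \<le> s})"

text \<open>M(t,(x_k),s): how many of the largest values fit into budget s.\<close>
definition Msel :: "nat \<Rightarrow> (nat \<Rightarrow> real) \<Rightarrow> real \<Rightarrow> nat" where
  "Msel t x s = (if t = 0 then 0
     else if ordstat t x ! (t - 1) > s then 0
     else Max {k \<in> {1..t}. sum_list (drop (t - k) (ordstat t x)) \<le> s})"

definition Dsum :: "(nat \<Rightarrow> nat \<Rightarrow> 'a \<Rightarrow> nat) \<Rightarrow> nat \<Rightarrow> nat \<Rightarrow> 'a \<Rightarrow> nat" where
  "Dsum D n w \<omega> = (\<Sum>j=1..w. D n j \<omega>)"

definition Rsum :: "(nat \<Rightarrow> nat \<Rightarrow> 'a \<Rightarrow> real) \<Rightarrow> nat \<Rightarrow> nat \<Rightarrow> 'a \<Rightarrow> real" where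
  "Rsum R n w \<omega> = (\<Sum>j=1..w. R n j \<omega>)"

primrec wf_proc :: "(nat \<Rightarrow> nat \<Rightarrow> 'a \<Rightarrow> nat) \<Rightarrow> (nat \<Rightarrow> nat \<Rightarrow> 'a \<Rightarrow> real) \<Rightarrow>
    (nat \<Rightarrow> nat \<Rightarrow> 'a \<Rightarrow> real) \<Rightarrow> nat \<Rightarrow> 'a \<Rightarrow> nat" where
  "wf_proc D X R 0 \<omega> = 1"
| "wf_proc D X R (Suc n) \<omega> =
     Nsel (Dsum D n (wf_proc D X R n \<omega>) \<omega>) (\<lambda>k. X n k \<omega>) (Rsum R n (wf_proc D X R n \<omega>) \<omega>)"

primrec sf_proc :: "(nat \<Rightarrow> nat \<Rightarrow> 'a \<Rightarrow> nat) \<Rightarrow> (nat \<Rightarrow> nat \<Rightarrow> 'a \<Rightarrow> real) \<Rightarrow>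
    (nat \<Rightarrow> nat \<Rightarrow> 'a \<Rightarrow> real) \<Rightarrow> nat \<Rightarrow> 'a \<Rightarrow> nat" where
  "sf_proc D X R 0 \<omega> = 1"
| "sf_proc D X R (Suc n) \<omega> =
     Msel (Dsum D n (sf_proc D X R n \<omega>) \<omega>) (\<lambda>k. X n k \<omega>) (Rsum R n (sf_proc D X R n \<omega>) \<omega>)"

text \<open>Ratio Z_{n+1}/Z_n, set to 0 when Z_n = 0.\<close>
definition ratio :: "nat \<Rightarrow> nat \<Rightarrow> real" where
  "ratio a b = (if b = 0 then 0 else real a / real b)"

text \<open>All D, X, R (indices n \<ge> 0, k \<ge> 1) mutually independent; tag 0 = D, 1 = X, 2 = R.\<close>
definition all_vars :: "(nat \<Rightarrow> nat \<Rightarrow> 'a \<Rightarrow> nat) \<Rightarrow> (nat \<Rightarrow> nat \<Rightarrow> 'a \<Rightarrow> real) \<Rightarrow>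
    (nat \<Rightarrow> nat \<Rightarrow> 'a \<Rightarrow> real) \<Rightarrow> nat \<times> nat \<times> nat \<Rightarrow> 'a \<Rightarrow> real" where
  "all_vars D X R = (\<lambda>(i, n, k) \<omega>. if i = 0 then real (D n k \<omega>) else if i = 1 then X n k \<omega> else R n k \<omega>)"

definition var_index :: "(nat \<times> nat \<times> nat) set" where
  "var_index = {(i, n, k). i < 3 \<and> 1 \<le> k}"

definition standing_setup ::
  "'a measure \<Rightarrow> (nat \<Rightarrow> nat \<Rightarrow> 'a \<Rightarrow> nat) \<Rightarrow> (nat \<Rightarrow> nat \<Rightarrow> 'a \<Rightarrow> real) \<Rightarrow>
   (nat \<Rightarrow> nat \<Rightarrow> 'a \<Rightarrow> real) \<Rightarrow> bool" where
  "standing_setup M D X R \<longleftrightarrow>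
     prob_space M \<and>
     (\<forall>n k. D n k \<in> M \<rightarrow>\<^sub>M count_space UNIV) \<and>
     (\<forall>n k. X n k \<in> borel_measurable M) \<and>
     (\<forall>n k. R n k \<in> borel_measurable M) \<and>
     prob_space.indep_vars M (\<lambda>_. borel) (all_vars D X R) var_index \<and>
     (\<forall>n k. 1 \<le> k \<longrightarrow> distr M (count_space UNIV) (D n k) = distr M (count_space UNIV) (D 0 1)) \<and>
     (\<forall>n k. 1 \<le> k \<longrightarrow> distr M borel (X n k) = distr M borel (X 0 1)) \<and>
     (\<forall>n k. 1 \<le> k \<longrightarrow> distr M borel (R n k) = distr M borel (R 0 1)) \<and>
     (\<forall>n k. \<forall>\<omega>\<in>space M. 0 \<le> X n k \<omega> \<and> 0 \<le> R n k \<omega>)"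

definition pD :: "'a measure \<Rightarrow> (nat \<Rightarrow> nat \<Rightarrow> 'a \<Rightarrow> nat) \<Rightarrow> nat \<Rightarrow> real" where
  "pD M D j = measure M {\<omega> \<in> space M. D 0 1 \<omega> = j}"

definition mD :: "'a measure \<Rightarrow> (nat \<Rightarrow> nat \<Rightarrow> 'a \<Rightarrow> nat) \<Rightarrow> real" where
  "mD M D = (\<integral>\<omega>. real (D 0 1 \<omega>) \<partial>M)"

definition muX :: "'a measure \<Rightarrow> (nat \<Rightarrow> nat \<Rightarrow> 'a \<Rightarrow> real) \<Rightarrow> real" where
  "muX M X = (\<integral>\<omega>. X 0 1 \<omega> \<partial>M)"

definition rR :: "'a measure \<Rightarrow> (nat \<Rightarrow> nat \<Rightarrow> 'a \<Rightarrow> real) \<Rightarrow> real" where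
  "rR M R = (\<integral>\<omega>. R 0 1 \<omega> \<partial>M)"

definition cdfX :: "'a measure \<Rightarrow> (nat \<Rightarrow> nat \<Rightarrow> 'a \<Rightarrow> real) \<Rightarrow> real \<Rightarrow> real" where
  "cdfX M X x = measure M {\<omega> \<in> space M. X 0 1 \<omega> \<le> x}"

definition lawX :: "'a measure \<Rightarrow> (nat \<Rightarrow> nat \<Rightarrow> 'a \<Rightarrow> real) \<Rightarrow> real measure" where
  "lawX M X = distr M borel (X 0 1)"

definition supp_sup :: "'a measure \<Rightarrow> (nat \<Rightarrow> nat \<Rightarrow> 'a \<Rightarrow> real) \<Rightarrow> real" where
  "supp_sup M X = Inf {x. cdfX M X x = 1}"

definition assumptions_A ::
  "'a measure \<Rightarrow> (nat \<Rightarrow> nat \<Rightarrow> 'a \<Rightarrow> nat) \<Rightarrow> (nat \<Rightarrow> nat \<Rightarrow> 'a \<Rightarrow> real) \<Rightarrow>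
   (nat \<Rightarrow> nat \<Rightarrow> 'a \<Rightarrow> real) \<Rightarrow> bool" where
  "assumptions_A M D X R \<longleftrightarrow>
     (\<forall>x. isCont (cdfX M X) x) \<and>
     \<comment> \<open>(A1): means exist (finite) and 1 < m, 0 < mu\<close>
     integrable M (\<lambda>\<omega>. real (D 0 1 \<omega>)) \<and> integrable M (X 0 1) \<and> integrable M (R 0 1) \<and>
     1 < mD M D \<and> 0 < muX M X \<and>
     \<comment> \<open>(A2)\<close>
     pD M D 0 > 0 \<and> (\<exists>k\<ge>2. pD M D k > 0) \<and>
     \<comment> \<open>(A4): finite variances\<close>
     integrable M (\<lambda>\<omega>. (real (D 0 1 \<omega>))\<^sup>2) \<and> integrable M (\<lambda>\<omega>. (X 0 1 \<omega>)\<^sup>2) \<and>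
     integrable M (\<lambda>\<omega>. (R 0 1 \<omega>)\<^sup>2) \<and>
     \<comment> \<open>(A5): boundedness\<close>
     (\<exists>C. \<forall>n k. AE \<omega> in M. real (D n k \<omega>) \<le> C \<and> \<bar>X n k \<omega>\<bar> \<le> C \<and> \<bar>R n k \<omega>\<bar> \<le> C)"

definition reaches_all :: "'a measure \<Rightarrow> (nat \<Rightarrow> 'a \<Rightarrow> nat) \<Rightarrow> bool" where
  "reaches_all M Z \<longleftrightarrow> (\<forall>j\<ge>1. \<exists>n. measure M {\<omega> \<in> space M. Z n \<omega> = j} > 0)"

end

theory Submission
  imports Defs "HOL-Probability.Probability"
begin

lemma take1_nth: "(ys::real list) \<noteq> [] \<Longrightarrow> take 1 ys = [ys ! 0]"
  by (cases ys) auto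
lemma drop_last1: "(ys::real list) \<noteq> [] \<Longrightarrow> drop (length ys - 1) ys = [ys ! (length ys - 1)]"
  by (cases ys rule: rev_cases) (auto simp: nth_append)
lemma card_filter_le: "card {j\<in>{1..t::nat}. P j} \<le> t"
  by (rule order_trans[OF card_mono[of "{1..t}"]]) auto

lemma sort_split:
  fixes xs :: "real list"
  assumes "\<forall>a\<in>set xs. \<forall>b\<in>set xs. P a \<longrightarrow> \<not> P b \<longrightarrow> a \<le> b"
  shows "sort xs = sort (filter P xs) @ sort (filter (\<lambda>a. \<not> P a) xs)"
proof (rule properties_for_sort)
  show "mset (sort (filter P xs) @ sort (filter (\<lambda>a. \<not> P a) xs)) = mset xs"
    by (simp add: multiset_partition[symmetric])
  show "sorted (sort (filter P xs) @ sort (filter (\<lambda>a. \<not> P a) xs))"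
    using assms by (auto simp: sorted_append)
qed

lemma ordstat_basic:
  "length (ordstat t x) = t" "set (ordstat t x) = x ` {1..t}" "sorted (ordstat t x)"
  by (auto simp: ordstat_def atLeastLessThanSuc_atLeastAtMost)

lemma length_filter_sort: "length (filter P (sort xs)) = length (filter P xs)"
  by (metis mset_filter mset_sort size_mset)

lemma sum_list_sort: "sum_list (sort (xs::real list)) = sum_list xs"
  by (metis mset_sort sum_mset_sum_list)

lemma filter_map_upt:
  "sum_list (filter P (map x [1..<Suc t])) = (\<Sum>j\<in>{j\<in>{1..t}. P (x j)}. (x j::real))"
  "length (filter P (map x [1..<Suc t])) = card {j\<in>{1..t}. P (x j)}"
proof -
  have d: "distinct (filter (P \<circ> x) [1..<Suc t])" by simp
  have s: "set (filter (P \<circ> x) [1..<Suc t]) = {j\<in>{1..t}. P (x j)}" by auto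
  show "sum_list (filter P (map x [1..<Suc t])) = (\<Sum>j\<in>{j\<in>{1..t}. P (x j)}. (x j::real))"
    by (simp only: filter_map sum_list_distinct_conv_sum_set[OF d] s)
  show "length (filter P (map x [1..<Suc t])) = card {j\<in>{1..t}. P (x j)}"
    by (metis d distinct_card filter_map length_map s)
qed

lemma sorted_nth_le:
  fixes ys :: "real list"
  assumes "sorted ys" "i < length ys"
  shows "ys ! i \<le> c \<longleftrightarrow> i < length (filter (\<lambda>a. a \<le> c) ys)"
proof -
  have e: "ys = sort (filter (\<lambda>a. a \<le> c) ys) @ sort (filter (\<lambda>a. \<not> a \<le> c) ys)"
    using sort_split[of ys "\<lambda>a. a \<le> c"] assms(1) by (simp add: sorted_sort_id)
  let ?A = "sort (filter (\<lambda>a. a \<le> c) ys)" and ?B = "sort (filter (\<lambda>a. \<not> a \<le> c) ys)"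
  have "ys ! i = (?A @ ?B) ! i" using e by simp
  also have "\<dots> = (if i < length ?A then ?A ! i else ?B ! (i - length ?A))" by (rule nth_append)
  finally have yi: "ys ! i = (if i < length ?A then ?A ! i else ?B ! (i - length ?A))" .
  have lens: "length ys = length ?A + length ?B" using arg_cong[OF e, of length] by simp
  show ?thesis
  proof (cases "i < length ?A")
    case True
    have "?A ! i \<in> set ?A" using True by (intro nth_mem) simp
    then have "ys ! i \<in> set ?A" using yi True by simp
    then show ?thesis using True by auto
  next
    case False
    have "?B ! (i - length ?A) \<in> set ?B" using False assms(2) lens by (intro nth_mem) simp
    then have "ys ! i \<in> set ?B" using yi False by simp
    then show ?thesis using False by auto
  qed
qed

lemma ordstat_nth_le:
  assumes "i < t"
  shows "ordstat t x ! i \<le> c \<longleftrightarrow> i < card {j\<in>{1..t}. x j \<le> c}"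
proof -
  have 1: "ordstat t x ! i \<le> c \<longleftrightarrow> i < length (filter (\<lambda>a. a \<le> c) (ordstat t x))"
    using sorted_nth_le[OF ordstat_basic(3)] assms ordstat_basic(1) by metis
  have 2: "length (filter (\<lambda>a. a \<le> c) (ordstat t x)) = card {j\<in>{1..t}. x j \<le> c}"
    unfolding ordstat_def length_filter_sort filter_map_upt ..
  show ?thesis unfolding 1 2 ..
qed

lemma card_downclosed:
  assumes "finite S" "S \<noteq> {}" "\<And>k k'. k \<in> S \<Longrightarrow> 1 \<le> k' \<Longrightarrow> k' \<le> k \<Longrightarrow> k' \<in> S"
    "\<And>k. k \<in> S \<Longrightarrow> (1::nat) \<le> k"
  shows "card S = Max S"
proof -
  have "S = {1..Max S}"
  proof
    show "S \<subseteq> {1..Max S}"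
    proof
      fix k assume "k \<in> S"
      then show "k \<in> {1..Max S}" using assms(4)[of k] Max_ge[OF assms(1), of k] by simp
    qed
    show "{1..Max S} \<subseteq> S"
    proof
      fix k assume "k \<in> {1..Max S}"
      then show "k \<in> S" using assms(3)[OF Max_in[OF assms(1,2)], of k] by simp
    qed
  qed
  then show ?thesis by (metis card_atLeastAtMost diff_Suc_1)
qed

lemma sum_list_take_mono:
  fixes ys :: "real list"
  assumes "\<forall>a\<in>set ys. 0 \<le> a" "k \<le> k'"
  shows "sum_list (take k ys) \<le> sum_list (take k' ys)"
proof -
  have "take k' ys = take k ys @ take (k' - k) (drop k ys)"
    using assms(2) by (metis le_add_diff_inverse take_add)
  moreover have "0 \<le> sum_list (take (k' - k) (drop k ys))"
    using assms(1) by (intro sum_list_nonneg) (meson in_set_dropD in_set_takeD)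
  ultimately show ?thesis by simp
qed

lemma sum_list_drop_mono:
  fixes ys :: "real list"
  assumes "\<forall>a\<in>set ys. 0 \<le> a" "k \<le> k'"
  shows "sum_list (drop k' ys) \<le> sum_list (drop k ys)"
proof -
  have "drop k ys = take (k' - k) (drop k ys) @ drop k' ys"
    using assms(2) by (metis append_take_drop_id drop_drop le_add_diff_inverse2)
  moreover have "0 \<le> sum_list (take (k' - k) (drop k ys))"
    using assms(1) by (intro sum_list_nonneg) (meson in_set_dropD in_set_takeD)
  ultimately show ?thesis by (metis le_add_same_cancel2 sum_list_append)
qed

lemma Nsel_card:
  assumes nn: "\<forall>j\<in>{1..t}. 0 \<le> x j"
  shows "Nsel t x s = card {k\<in>{1..t}. sum_list (take k (ordstat t x)) \<le> s}"
proof -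
  let ?ys = "ordstat t x"
  let ?S = "{k\<in>{1..t}. sum_list (take k ?ys) \<le> s}"
  have ysnn: "\<forall>a\<in>set ?ys. 0 \<le> a" using nn ordstat_basic(2) by auto
  have dc: "k' \<in> ?S" if "k \<in> ?S" "1 \<le> k'" "k' \<le> k" for k k'
    using that sum_list_take_mono[OF ysnn, of k' k] by auto
  show ?thesis
  proof (cases "t = 0")
    case True then show ?thesis by (simp add: Nsel_def)
  next
    case t: False
    have t1: "take 1 ?ys = [?ys ! 0]" using t ordstat_basic(1)[of t x]
      by (intro take1_nth) auto
    show ?thesis
    proof (cases "s < ?ys ! 0")
      case True
      have "?S = {}"
      proof (rule ccontr)
        assume "?S \<noteq> {}"
        then obtain k where "k \<in> ?S" by blast
        then have "1 \<in> ?S" using dc[of k 1] by auto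
        then show False using True t1 by auto
      qed
      then show ?thesis using True t by (simp add: Nsel_def)
    next
      case False
      then have "1 \<in> ?S" using t t1 by auto
      then have "card ?S = Max ?S" by (intro card_downclosed) (use dc in auto)
      then show ?thesis using False t by (simp add: Nsel_def)
    qed
  qed
qed

lemma Msel_card:
  assumes nn: "\<forall>j\<in>{1..t}. 0 \<le> x j"
  shows "Msel t x s = card {k\<in>{1..t}. sum_list (drop (t - k) (ordstat t x)) \<le> s}"
proof -
  let ?ys = "ordstat t x"
  let ?S = "{k\<in>{1..t}. sum_list (drop (t - k) ?ys) \<le> s}"
  have ysnn: "\<forall>a\<in>set ?ys. 0 \<le> a" using nn ordstat_basic(2) by auto
  have dc: "k' \<in> ?S" if "k \<in> ?S" "1 \<le> k'" "k' \<le> k" for k k'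
  proof -
    have "sum_list (drop (t - k') ?ys) \<le> sum_list (drop (t - k) ?ys)"
      using that by (intro sum_list_drop_mono[OF ysnn]) auto
    then show ?thesis using that by auto
  qed
  show ?thesis
  proof (cases "t = 0")
    case True then show ?thesis by (simp add: Msel_def)
  next
    case t: False
    have ne: "?ys \<noteq> []" using t ordstat_basic(1)[of t x] by auto
    have t1: "drop (t - 1) ?ys = [?ys ! (t - 1)]" using drop_last1[OF ne] ordstat_basic(1)[of t x]
      by simp
    show ?thesis
    proof (cases "s < ?ys ! (t - 1)")
      case True
      have "?S = {}"
      proof (rule ccontr)
        assume "?S \<noteq> {}"
        then obtain k where "k \<in> ?S" by blast
        then have "1 \<in> ?S" using dc[of k 1] by auto
        then show False using True t1 by auto
      qed
      then show ?thesis using True t by (simp add: Msel_def)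
    next
      case False
      then have "1 \<in> ?S" using t t1 by auto
      then have "card ?S = Max ?S" by (intro card_downclosed) (use dc in auto)
      then show ?thesis using False t by (simp add: Msel_def)
    qed
  qed
qed

lemma Nsel_lb:
  assumes nn: "\<forall>j\<in>{1..t}. 0 \<le> x j"
    and sm: "(\<Sum>j\<in>{j\<in>{1..t}. x j \<le> u}. x j) \<le> s"
  shows "card {j\<in>{1..t}. x j \<le> u} \<le> Nsel t x s"
proof -
  let ?xs = "map x [1..<Suc t]"
  let ?c = "card {j\<in>{1..t}. x j \<le> u}"
  let ?ys = "ordstat t x"
  have sp: "?ys = sort (filter (\<lambda>a. a \<le> u) ?xs) @ sort (filter (\<lambda>a. \<not> a \<le> u) ?xs)"
    unfolding ordstat_def by (rule sort_split) auto
  have lA: "length (sort (filter (\<lambda>a. a \<le> u) ?xs)) = ?c"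
    using filter_map_upt(2) by simp
  have "take ?c ?ys = take (length (sort (filter (\<lambda>a. a \<le> u) ?xs))) (sort (filter (\<lambda>a. a \<le> u) ?xs) @ sort (filter (\<lambda>a. \<not> a \<le> u) ?xs))"
    using sp lA by simp
  then have "take ?c ?ys = sort (filter (\<lambda>a. a \<le> u) ?xs)" by simp
  then have pc: "sum_list (take ?c ?ys) = (\<Sum>j\<in>{j\<in>{1..t}. x j \<le> u}. x j)"
    using filter_map_upt(1)[of "\<lambda>a. a \<le> u" x t] by (simp only: sum_list_sort)
  have ysnn: "\<forall>a\<in>set ?ys. 0 \<le> a" using nn ordstat_basic(2) by auto
  have ct: "?c \<le> t" by (rule card_filter_le)
  have "{1..?c} \<subseteq> {k\<in>{1..t}. sum_list (take k ?ys) \<le> s}"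
  proof
    fix k assume k: "k \<in> {1..?c}"
    have "sum_list (take k ?ys) \<le> sum_list (take ?c ?ys)"
      using k by (intro sum_list_take_mono[OF ysnn]) auto
    then show "k \<in> {k\<in>{1..t}. sum_list (take k ?ys) \<le> s}" using k ct pc sm by auto
  qed
  then have "card {1..?c} \<le> card {k\<in>{1..t}. sum_list (take k ?ys) \<le> s}"
    by (intro card_mono) auto
  then show ?thesis using Nsel_card[OF nn] by simp
qed

lemma Msel_lb:
  assumes nn: "\<forall>j\<in>{1..t}. 0 \<le> x j"
    and sm: "(\<Sum>j\<in>{j\<in>{1..t}. v < x j}. x j) \<le> s"
  shows "card {j\<in>{1..t}. v < x j} \<le> Msel t x s"
proof -
  let ?xs = "map x [1..<Suc t]"
  let ?c = "card {j\<in>{1..t}. v < x j}"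
  let ?ys = "ordstat t x"
  have sp: "?ys = sort (filter (\<lambda>a. a \<le> v) ?xs) @ sort (filter (\<lambda>a. \<not> a \<le> v) ?xs)"
    unfolding ordstat_def by (rule sort_split) auto
  have lB: "length (sort (filter (\<lambda>a. \<not> a \<le> v) ?xs)) = ?c"
    using filter_map_upt(2)[of "\<lambda>a. \<not> a \<le> v" x t] by (simp add: not_le)
  have "length ?ys = t" by (rule ordstat_basic(1))
  then have lA: "length (sort (filter (\<lambda>a. a \<le> v) ?xs)) = t - ?c"
    using arg_cong[OF sp, of length] lB by simp
  have "drop (t - ?c) ?ys = drop (length (sort (filter (\<lambda>a. a \<le> v) ?xs))) (sort (filter (\<lambda>a. a \<le> v) ?xs) @ sort (filter (\<lambda>a. \<not> a \<le> v) ?xs))"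
    using sp lA by simp
  then have "drop (t - ?c) ?ys = sort (filter (\<lambda>a. \<not> a \<le> v) ?xs)" by simp
  moreover have "{j\<in>{1..t}. \<not> x j \<le> v} = {j\<in>{1..t}. v < x j}" by auto
  ultimately have pc: "sum_list (drop (t - ?c) ?ys) = (\<Sum>j\<in>{j\<in>{1..t}. v < x j}. x j)"
    using filter_map_upt(1)[of "\<lambda>a. \<not> a \<le> v" x t] by (simp only: sum_list_sort)
  have ysnn: "\<forall>a\<in>set ?ys. 0 \<le> a" using nn ordstat_basic(2) by auto
  have ct: "?c \<le> t" by (rule card_filter_le)
  have "{1..?c} \<subseteq> {k\<in>{1..t}. sum_list (drop (t - k) ?ys) \<le> s}"
  proof
    fix k assume k: "k \<in> {1..?c}"
    have "sum_list (drop (t - k) ?ys) \<le> sum_list (drop (t - ?c) ?ys)"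
      using k by (intro sum_list_drop_mono[OF ysnn]) auto
    then show "k \<in> {k\<in>{1..t}. sum_list (drop (t - k) ?ys) \<le> s}" using k ct pc sm by auto
  qed
  then have "card {1..?c} \<le> card {k\<in>{1..t}. sum_list (drop (t - k) ?ys) \<le> s}"
    by (intro card_mono) auto
  then show ?thesis using Msel_card[OF nn] by simp
qed


lemma nat_meas:
  fixes f :: "'a \<Rightarrow> nat"
  assumes "(\<lambda>\<omega>. real (f \<omega>)) \<in> borel_measurable N"
  shows "f \<in> N \<rightarrow>\<^sub>M count_space UNIV"
proof (subst measurable_count_space_eq2_countable, intro conjI ballI)
  show "f \<in> space N \<rightarrow> UNIV" by simp
  fix a :: nat
  have "{\<omega>\<in>space N. real (f \<omega>) = real a} \<in> sets N"
    using borel_measurable_eq[OF assms borel_measurable_const] .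
  moreover have "f -` {a} \<inter> space N = {\<omega>\<in>space N. real (f \<omega>) = real a}" by auto
  ultimately show "f -` {a} \<inter> space N \<in> sets N" by simp
qed

lemma real_nat_meas:
  assumes "f \<in> N \<rightarrow>\<^sub>M count_space UNIV"
  shows "(\<lambda>\<omega>. real (f \<omega> :: nat)) \<in> borel_measurable N"
  using measurable_compose[OF assms, of real borel] by (simp add: measurable_count_space_eq1)

lemma real_card_meas:
  assumes "finite A" "\<And>k. k \<in> A \<Longrightarrow> {\<omega>\<in>space N. P k \<omega>} \<in> sets N"
  shows "(\<lambda>\<omega>. real (card {k\<in>A. P k \<omega>})) \<in> borel_measurable N"
proof -
  have eq: "real (card {k\<in>A. P k \<omega>}) = (\<Sum>k\<in>A. if P k \<omega> then 1 else 0)" for \<omega>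
    using assms(1) by (simp add: sum.If_cases Int_def)
  have "(\<lambda>\<omega>. \<Sum>k\<in>A. if P k \<omega> then 1 else (0::real)) \<in> borel_measurable N"
  proof (rule borel_measurable_sum)
    fix k assume "k \<in> A"
    then show "(\<lambda>\<omega>. if P k \<omega> then 1 else (0::real)) \<in> borel_measurable N"
      by (intro measurable_If borel_measurable_const assms(2))
  qed
  then show ?thesis by (simp add: eq)
qed

lemma ostat_meas:
  assumes xm: "\<And>j. j \<in> {1..t} \<Longrightarrow> x j \<in> borel_measurable N" and i: "i < t"
  shows "(\<lambda>\<omega>. ordstat t (\<lambda>j. x j \<omega>) ! i) \<in> borel_measurable N"
proof (subst borel_measurable_iff_le, intro allI)
  fix a
  have g: "(\<lambda>\<omega>. real (card {j\<in>{1..t}. x j \<omega> \<le> a})) \<in> borel_measurable N"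
  proof (rule real_card_meas)
    fix j assume "j \<in> {1..t}"
    then have "x j \<in> borel_measurable N" by (rule xm)
    then show "{\<omega>\<in>space N. x j \<omega> \<le> a} \<in> sets N"
      using borel_measurable_le[OF _ borel_measurable_const] by blast
  qed simp
  have m: "{\<omega>\<in>space N. real i < real (card {j\<in>{1..t}. x j \<omega> \<le> a})} \<in> sets N"
    using borel_measurable_less[OF borel_measurable_const g] .
  have e: "{\<omega>\<in>space N. ordstat t (\<lambda>j. x j \<omega>) ! i \<le> a} =
      {\<omega>\<in>space N. real i < real (card {j\<in>{1..t}. x j \<omega> \<le> a})}"
    by (intro Collect_cong conj_cong refl) (simp only: ordstat_nth_le[OF i] of_nat_less_iff)
  show "{\<omega>\<in>space N. ordstat t (\<lambda>j. x j \<omega>) ! i \<le> a} \<in> sets N"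
    unfolding e by (rule m)
qed

lemma sum_list_take_nth:
  fixes ys :: "real list"
  assumes "k \<le> length ys"
  shows "sum_list (take k ys) = (\<Sum>i<k. ys ! i)"
  using assms by (simp add: sum_list_sum_nth atLeast0LessThan min_absorb1)

lemma psum_meas:
  assumes xm: "\<And>j. j \<in> {1..t} \<Longrightarrow> x j \<in> borel_measurable N" and k: "k \<le> t"
  shows "(\<lambda>\<omega>. sum_list (take k (ordstat t (\<lambda>j. x j \<omega>)))) \<in> borel_measurable N"
proof -
  have "(\<lambda>\<omega>. \<Sum>i<k. ordstat t (\<lambda>j. x j \<omega>) ! i) \<in> borel_measurable N"
    using k by (intro borel_measurable_sum ostat_meas[OF xm]) auto
  moreover have "sum_list (take k (ordstat t (\<lambda>j. x j \<omega>))) = (\<Sum>i<k. ordstat t (\<lambda>j. x j \<omega>) ! i)" for \<omega>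
    using k by (intro sum_list_take_nth) (simp add: ordstat_basic(1))
  ultimately show ?thesis by simp
qed

lemma Nsel_meas:
  assumes xm: "\<And>j. j \<in> {1..t} \<Longrightarrow> x j \<in> borel_measurable N" and sm: "s \<in> borel_measurable N"
    and nn: "\<And>\<omega> j. \<omega> \<in> space N \<Longrightarrow> j \<in> {1..t} \<Longrightarrow> 0 \<le> x j \<omega>"
  shows "(\<lambda>\<omega>. Nsel t (\<lambda>j. x j \<omega>) (s \<omega>)) \<in> N \<rightarrow>\<^sub>M count_space UNIV"
proof (rule nat_meas)
  have "(\<lambda>\<omega>. real (card {k\<in>{1..t}. sum_list (take k (ordstat t (\<lambda>j. x j \<omega>))) \<le> s \<omega>})) \<in> borel_measurable N"
  proof (rule real_card_meas)
    fix k assume "k \<in> {1..t}"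
    then have "(\<lambda>\<omega>. sum_list (take k (ordstat t (\<lambda>j. x j \<omega>)))) \<in> borel_measurable N"
      by (intro psum_meas[OF xm]) auto
    then show "{\<omega>\<in>space N. sum_list (take k (ordstat t (\<lambda>j. x j \<omega>))) \<le> s \<omega>} \<in> sets N"
      using borel_measurable_le[OF _ sm] by blast
  qed simp
  then show "(\<lambda>\<omega>. real (Nsel t (\<lambda>j. x j \<omega>) (s \<omega>))) \<in> borel_measurable N"
    by (rule measurable_cong[THEN iffD1, rotated]) (simp add: Nsel_card nn)
qed

lemma Msel_meas:
  assumes xm: "\<And>j. j \<in> {1..t} \<Longrightarrow> x j \<in> borel_measurable N" and sm: "s \<in> borel_measurable N"
    and nn: "\<And>\<omega> j. \<omega> \<in> space N \<Longrightarrow> j \<in> {1..t} \<Longrightarrow> 0 \<le> x j \<omega>"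
  shows "(\<lambda>\<omega>. Msel t (\<lambda>j. x j \<omega>) (s \<omega>)) \<in> N \<rightarrow>\<^sub>M count_space UNIV"
proof (rule nat_meas)
  have dr: "sum_list (drop a ys) = sum_list ys - sum_list (take a ys)" for a and ys :: "real list"
    by (metis add_diff_cancel_left' append_take_drop_id sum_list_append)
  have "(\<lambda>\<omega>. real (card {k\<in>{1..t}. sum_list (drop (t - k) (ordstat t (\<lambda>j. x j \<omega>))) \<le> s \<omega>})) \<in> borel_measurable N"
  proof (rule real_card_meas)
    fix k assume "k \<in> {1..t}"
    then have "(\<lambda>\<omega>. sum_list (take t (ordstat t (\<lambda>j. x j \<omega>))) - sum_list (take (t - k) (ordstat t (\<lambda>j. x j \<omega>)))) \<in> borel_measurable N"
      by (intro borel_measurable_diff psum_meas[OF xm]) auto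
    moreover have "sum_list (take t (ordstat t (\<lambda>j. x j \<omega>))) = sum_list (ordstat t (\<lambda>j. x j \<omega>))" for \<omega>
      by (simp add: ordstat_basic(1))
    ultimately have "(\<lambda>\<omega>. sum_list (drop (t - k) (ordstat t (\<lambda>j. x j \<omega>)))) \<in> borel_measurable N"
      by (simp add: dr)
    then show "{\<omega>\<in>space N. sum_list (drop (t - k) (ordstat t (\<lambda>j. x j \<omega>))) \<le> s \<omega>} \<in> sets N"
      using borel_measurable_le[OF _ sm] by blast
  qed simp
  then show "(\<lambda>\<omega>. real (Msel t (\<lambda>j. x j \<omega>) (s \<omega>))) \<in> borel_measurable N"
    by (rule measurable_cong[THEN iffD1, rotated]) (simp add: Msel_card nn)
qed

lemma sel_meas:
  assumes sel: "sel = Nsel \<or> sel = Msel"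
    and xm: "\<And>j. j \<in> {1..t} \<Longrightarrow> x j \<in> borel_measurable N" and sm: "s \<in> borel_measurable N"
    and nn: "\<And>\<omega> j. \<omega> \<in> space N \<Longrightarrow> j \<in> {1..t} \<Longrightarrow> 0 \<le> x j \<omega>"
  shows "(\<lambda>\<omega>. sel t (\<lambda>j. x j \<omega>) (s \<omega>)) \<in> N \<rightarrow>\<^sub>M count_space UNIV"
proof -
  have 1: "(\<lambda>\<omega>. Nsel t (\<lambda>j. x j \<omega>) (s \<omega>)) \<in> N \<rightarrow>\<^sub>M count_space UNIV"
    by (rule Nsel_meas) (use xm sm nn in auto)
  have 2: "(\<lambda>\<omega>. Msel t (\<lambda>j. x j \<omega>) (s \<omega>)) \<in> N \<rightarrow>\<^sub>M count_space UNIV"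
    by (rule Msel_meas) (use xm sm nn in auto)
  show ?thesis using sel 1 2 by blast
qed

primrec gproc :: "(nat \<Rightarrow> (nat \<Rightarrow> real) \<Rightarrow> real \<Rightarrow> nat) \<Rightarrow> (nat \<Rightarrow> nat \<Rightarrow> 'a \<Rightarrow> nat) \<Rightarrow> (nat \<Rightarrow> nat \<Rightarrow> 'a \<Rightarrow> real) \<Rightarrow>
    (nat \<Rightarrow> nat \<Rightarrow> 'a \<Rightarrow> real) \<Rightarrow> nat \<Rightarrow> 'a \<Rightarrow> nat" where
  "gproc sel D X R 0 \<omega> = 1"
| "gproc sel D X R (Suc n) \<omega> =
     sel (Dsum D n (gproc sel D X R n \<omega>) \<omega>) (\<lambda>k. X n k \<omega>) (Rsum R n (gproc sel D X R n \<omega>) \<omega>)"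

lemma wf_gproc: "wf_proc D X R = gproc Nsel D X R"
proof (intro ext)
  fix n \<omega> show "wf_proc D X R n \<omega> = gproc Nsel D X R n \<omega>" by (induction n) simp_all
qed

lemma sf_gproc: "sf_proc D X R = gproc Msel D X R"
proof (intro ext)
  fix n \<omega> show "sf_proc D X R n \<omega> = gproc Msel D X R n \<omega>" by (induction n) simp_all
qed

lemma Dsum_meas:
  assumes "\<And>j. j \<in> {1..w} \<Longrightarrow> D k j \<in> N \<rightarrow>\<^sub>M count_space UNIV"
  shows "Dsum D k w \<in> N \<rightarrow>\<^sub>M count_space UNIV"
proof (rule nat_meas)
  have "(\<lambda>\<omega>. \<Sum>j=1..w. real (D k j \<omega>)) \<in> borel_measurable N"
    by (intro borel_measurable_sum real_nat_meas assms)
  then show "(\<lambda>\<omega>. real (Dsum D k w \<omega>)) \<in> borel_measurable N"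
    by (simp add: Dsum_def)
qed

lemma Rsum_meas:
  assumes "\<And>j. j \<in> {1..w} \<Longrightarrow> R k j \<in> borel_measurable N"
  shows "Rsum R k w \<in> borel_measurable N"
  unfolding Rsum_def by (intro borel_measurable_sum assms)

lemma step_meas:
  assumes sel: "sel = Nsel \<or> sel = Msel"
    and Dm: "\<And>j. 1 \<le> j \<Longrightarrow> D k j \<in> N \<rightarrow>\<^sub>M count_space UNIV"
    and Xm: "\<And>j. 1 \<le> j \<Longrightarrow> X k j \<in> borel_measurable N"
    and Rm: "\<And>j. 1 \<le> j \<Longrightarrow> R k j \<in> borel_measurable N"
    and nn: "\<And>\<omega> j. \<omega> \<in> space N \<Longrightarrow> 0 \<le> X k j \<omega>"
  shows "(\<lambda>\<omega>. sel (Dsum D k w \<omega>) (\<lambda>j. X k j \<omega>) (Rsum R k w \<omega>)) \<in> N \<rightarrow>\<^sub>M count_space UNIV"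
proof (rule measurable_compose_countable[where f = "\<lambda>t \<omega>. sel t (\<lambda>j. X k j \<omega>) (Rsum R k w \<omega>)"])
  show "Dsum D k w \<in> N \<rightarrow>\<^sub>M count_space UNIV" by (rule Dsum_meas) (use Dm in auto)
  fix t
  show "(\<lambda>\<omega>. sel t (\<lambda>j. X k j \<omega>) (Rsum R k w \<omega>)) \<in> N \<rightarrow>\<^sub>M count_space UNIV"
  proof (rule sel_meas[OF sel])
    show "Rsum R k w \<in> borel_measurable N" by (rule Rsum_meas) (use Rm in auto)
  qed (use Xm nn in auto)
qed

lemma gproc_meas:
  assumes sel: "sel = Nsel \<or> sel = Msel"
    and Dm: "\<And>n j. n < K \<Longrightarrow> 1 \<le> j \<Longrightarrow> D n j \<in> N \<rightarrow>\<^sub>M count_space UNIV"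
    and Xm: "\<And>n j. n < K \<Longrightarrow> 1 \<le> j \<Longrightarrow> X n j \<in> borel_measurable N"
    and Rm: "\<And>n j. n < K \<Longrightarrow> 1 \<le> j \<Longrightarrow> R n j \<in> borel_measurable N"
    and nn: "\<And>\<omega> n j. \<omega> \<in> space N \<Longrightarrow> 0 \<le> X n j \<omega>"
  shows "k \<le> K \<Longrightarrow> gproc sel D X R k \<in> N \<rightarrow>\<^sub>M count_space UNIV"
proof (induction k)
  case 0 then show ?case by simp
next
  case (Suc k)
  then have kK: "k < K" by simp
  have "(\<lambda>\<omega>. (\<lambda>w \<omega>. sel (Dsum D k w \<omega>) (\<lambda>j. X k j \<omega>) (Rsum R k w \<omega>)) (gproc sel D X R k \<omega>) \<omega>) \<in> N \<rightarrow>\<^sub>M count_space UNIV"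
    by (rule measurable_compose_countable[OF step_meas[OF sel]])
       (use kK Suc in \<open>auto intro: Dm Xm Rm nn\<close>)
  then show ?case by simp
qed


locale gw =
  fixes M :: "'a measure" and D :: "nat \<Rightarrow> nat \<Rightarrow> 'a \<Rightarrow> nat" and X R :: "nat \<Rightarrow> nat \<Rightarrow> 'a \<Rightarrow> real"
  assumes std: "standing_setup M D X R"
begin

sublocale prob_space M using std by (simp add: standing_setup_def)

abbreviation "V \<equiv> all_vars D X R"

lemma Dm: "D n k \<in> M \<rightarrow>\<^sub>M count_space UNIV" using std by (simp add: standing_setup_def)
lemma Xm: "X n k \<in> borel_measurable M" using std by (simp add: standing_setup_def)
lemma Rm: "R n k \<in> borel_measurable M" using std by (simp add: standing_setup_def)
lemma Xnn: "\<omega> \<in> space M \<Longrightarrow> 0 \<le> X n k \<omega>" using std by (simp add: standing_setup_def)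
lemma Rnn: "\<omega> \<in> space M \<Longrightarrow> 0 \<le> R n k \<omega>" using std by (simp add: standing_setup_def)
lemma indepV: "indep_vars (\<lambda>_. borel) V var_index" using std by (simp add: standing_setup_def)

lemma V0: "V (0, n, j) = (\<lambda>\<omega>. real (D n j \<omega>))" by (simp add: all_vars_def)
lemma V1: "V (Suc 0, n, j) = X n j" by (simp add: all_vars_def)
lemma V2: "V (2, n, j) = R n j" by (simp add: all_vars_def)

lemma Vm: "V i \<in> borel_measurable M"
proof -
  obtain c n j where i: "i = (c, n, j)" by (cases i) auto
  show ?thesis
    using real_nat_meas[OF Dm] Xm Rm unfolding i all_vars_def by auto
qed

definition EV :: "nat \<times> nat \<times> nat \<Rightarrow> 'a set set" where
  "EV i = sigma_sets (space M) {V i -` A \<inter> space M | A. A \<in> sets borel}"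

lemma EV_Pow: "{V i -` A \<inter> space M | A. A \<in> sets borel} \<subseteq> Pow (space M)" by auto

lemma EV_sub: "EV i \<subseteq> Pow (space M)"
  unfolding EV_def using sigma_sets_into_sp[OF EV_Pow] by blast

definition Past :: "nat \<Rightarrow> (nat \<times> nat \<times> nat) set" where
  "Past k = {(c, n, j). c < 3 \<and> 1 \<le> j \<and> n < k}"
definition Gen :: "nat \<Rightarrow> (nat \<times> nat \<times> nat) set" where
  "Gen k = {(c, n, j). c < 3 \<and> 1 \<le> j \<and> n = k}"

definition SG :: "(nat \<times> nat \<times> nat) set \<Rightarrow> 'a measure" where
  "SG I = sigma (space M) (\<Union>i\<in>I. EV i)"

lemma SG_Pow: "(\<Union>i\<in>I. EV i) \<subseteq> Pow (space M)" using EV_sub by blast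

lemma sets_SG: "sets (SG I) = sigma_sets (space M) (\<Union>i\<in>I. EV i)"
  unfolding SG_def by (rule sets_measure_of[OF SG_Pow])

lemma space_SG: "space (SG I) = space M"
  unfolding SG_def by (rule space_measure_of[OF SG_Pow])

lemma V_SG: assumes "i \<in> I" shows "V i \<in> borel_measurable (SG I)"
proof (rule measurableI)
  fix x assume "x \<in> space (SG I)" then show "V i x \<in> space borel" by simp
next
  fix A :: "real set" assume "A \<in> sets borel"
  then have "V i -` A \<inter> space M \<in> EV i" unfolding EV_def by (auto intro: sigma_sets.Basic)
  then have "V i -` A \<inter> space M \<in> sets (SG I)" unfolding sets_SG using assms by (auto intro: sigma_sets.Basic)
  then show "V i -` A \<inter> space (SG I) \<in> sets (SG I)" by (simp add: space_SG)
qed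

lemma D_SG: assumes "(0, n, j) \<in> I" shows "D n j \<in> SG I \<rightarrow>\<^sub>M count_space UNIV"
proof (rule nat_meas)
  show "(\<lambda>\<omega>. real (D n j \<omega>)) \<in> borel_measurable (SG I)" using V_SG[OF assms] by (simp add: V0)
qed

lemma X_SG: assumes "(Suc 0, n, j) \<in> I" shows "X n j \<in> borel_measurable (SG I)"
  using V_SG[OF assms] by (simp add: V1)

lemma R_SG: assumes "(2, n, j) \<in> I" shows "R n j \<in> borel_measurable (SG I)"
  using V_SG[OF assms] by (simp add: V2)

lemma indep_EV: "indep_sets EV var_index"
  using indepV unfolding indep_vars_def EV_def by blast

lemma indep_Past_Gen:
  assumes A: "A \<in> sets (SG (Past k))" and B: "B \<in> sets (SG (Gen k))"
  shows "prob (A \<inter> B) = prob A * prob B"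
proof -
  define I' where "I' = (\<lambda>b::bool. if b then Past k else Gen k)"
  have sub: "(\<Union>b. I' b) \<subseteq> var_index" unfolding I'_def Past_def Gen_def var_index_def by auto
  have ind: "indep_sets EV (\<Union>b\<in>UNIV. I' b)"
    using indep_sets_mono_index[OF sub indep_EV] by simp
  have IS: "Int_stable (EV i)" for i
    using sigma_algebra_sigma_sets[OF EV_Pow[of i]] unfolding sigma_algebra_def EV_def
    by (auto intro: algebra.Int_stable)
  have dj: "disjoint_family_on I' UNIV"
    unfolding disjoint_family_on_def I'_def Past_def Gen_def by auto
  have ind2: "indep_sets (\<lambda>b. sigma_sets (space M) (\<Union>i\<in>I' b. EV i)) UNIV"
    by (rule indep_sets_collect_sigma[OF ind IS dj])
  define F where "F = (\<lambda>b::bool. if b then A else B)"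
  have "prob (\<Inter>b\<in>UNIV. F b) = (\<Prod>b\<in>UNIV. prob (F b))"
  proof (rule indep_setsD[OF ind2])
    show "\<forall>b\<in>UNIV. F b \<in> sigma_sets (space M) (\<Union>i\<in>I' b. EV i)"
      using A B unfolding F_def I'_def sets_SG by auto
  qed auto
  moreover have "(\<Inter>b\<in>UNIV. F b) = A \<inter> B" unfolding F_def UNIV_bool by auto
  moreover have "(\<Prod>b\<in>UNIV. prob (F b)) = prob A * prob B" unfolding F_def UNIV_bool by simp
  ultimately show ?thesis by simp
qed

lemma gproc_SG:
  assumes sel: "sel = Nsel \<or> sel = Msel" and n: "n \<le> k"
  shows "gproc sel D X R n \<in> SG (Past k) \<rightarrow>\<^sub>M count_space UNIV"
proof (rule gproc_meas[OF sel _ _ _ _ n])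
  show "D m j \<in> SG (Past k) \<rightarrow>\<^sub>M count_space UNIV" if "m < k" "1 \<le> j" for m j
    using that by (intro D_SG) (simp add: Past_def)
  show "X m j \<in> borel_measurable (SG (Past k))" if "m < k" "1 \<le> j" for m j
    using that by (intro X_SG) (simp add: Past_def)
  show "R m j \<in> borel_measurable (SG (Past k))" if "m < k" "1 \<le> j" for m j
    using that by (intro R_SG) (simp add: Past_def)
  show "0 \<le> X m j \<omega>" if "\<omega> \<in> space (SG (Past k))" for \<omega> m j
    using that Xnn by (simp add: space_SG)
qed

lemma step_SG:
  assumes sel: "sel = Nsel \<or> sel = Msel"
  shows "(\<lambda>\<omega>. sel (Dsum D k w \<omega>) (\<lambda>j. X k j \<omega>) (Rsum R k w \<omega>)) \<in> SG (Gen k) \<rightarrow>\<^sub>M count_space UNIV"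
proof (rule step_meas[OF sel])
  show "D k j \<in> SG (Gen k) \<rightarrow>\<^sub>M count_space UNIV" if "1 \<le> j" for j
    using that by (intro D_SG) (simp add: Gen_def)
  show "X k j \<in> borel_measurable (SG (Gen k))" if "1 \<le> j" for j
    using that by (intro X_SG) (simp add: Gen_def)
  show "R k j \<in> borel_measurable (SG (Gen k))" if "1 \<le> j" for j
    using that by (intro R_SG) (simp add: Gen_def)
  show "0 \<le> X k j \<omega>" if "\<omega> \<in> space (SG (Gen k))" for \<omega> j
    using that Xnn by (simp add: space_SG)
qed

lemma SG_sets_sub: "sets (SG I) \<subseteq> sets M"
proof -
  have "(\<Union>i\<in>I. EV i) \<subseteq> sets M"
  proof (intro UN_least subsetI)
    fix i S assume "S \<in> EV i"
    then show "S \<in> sets M" unfolding EV_def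
    proof (induction rule: sigma_sets.induct)
      case (Basic a) then show ?case using Vm[of i] by (auto simp: measurable_def)
    qed auto
  qed
  then show ?thesis unfolding sets_SG by (rule sets.sigma_sets_subset)
qed

lemma gproc_M:
  assumes sel: "sel = Nsel \<or> sel = Msel"
  shows "gproc sel D X R n \<in> M \<rightarrow>\<^sub>M count_space UNIV"
  by (rule gproc_meas[OF sel _ _ _ _ order_refl]) (auto intro: Dm Xm Rm Xnn)

end

context gw begin

lemma V1': "V (1, n, j) = X n j" by (simp add: all_vars_def)
lemma V0': "V (0, n, j) \<omega> = real (D n j \<omega>)" by (simp add: all_vars_def)

lemma distr_V:
  assumes c: "c < 3" and j: "1 \<le> j"
  shows "distr M borel (V (c,k,j)) = distr M borel (V (c,0,1))"
proof -
  have rm: "(real :: nat \<Rightarrow> real) \<in> count_space UNIV \<rightarrow>\<^sub>M borel" by (simp add: measurable_count_space_eq1)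
  have dD0: "\<forall>n k. 1 \<le> k \<longrightarrow> distr M (count_space UNIV) (D n k) = distr M (count_space UNIV) (D 0 1)"
    using std unfolding standing_setup_def by blast
  have dX0: "\<forall>n k. 1 \<le> k \<longrightarrow> distr M borel (X n k) = distr M borel (X 0 1)"
    using std unfolding standing_setup_def by blast
  have dR0: "\<forall>n k. 1 \<le> k \<longrightarrow> distr M borel (R n k) = distr M borel (R 0 1)"
    using std unfolding standing_setup_def by blast
  have dD: "distr M (count_space UNIV) (D k j) = distr M (count_space UNIV) (D 0 1)"
    using dD0 j by blast
  have dX: "distr M borel (X k j) = distr M borel (X 0 1)" using dX0 j by blast
  have dR: "distr M borel (R k j) = distr M borel (R 0 1)" using dR0 j by blast
  have c0: "distr M borel (\<lambda>\<omega>. real (D n j' \<omega>)) = distr (distr M (count_space UNIV) (D n j')) borel real" for n j'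
    by (subst distr_distr[OF rm Dm]) (simp add: comp_def)
  consider "c = 0" | "c = 1" | "c = 2" using c by linarith
  then show ?thesis
  proof cases
    case 1 then show ?thesis using c0[of k j] c0[of 0 1] dD by (simp add: V0)
  next
    case 2 then show ?thesis using dX by (simp add: V1 V1')
  next
    case 3 then show ?thesis using dR by (simp add: V2)
  qed
qed

lemma distr_fV:
  assumes c: "c < 3" and j: "1 \<le> j" and f: "f \<in> borel_measurable borel"
  shows "distr M borel (\<lambda>\<omega>. f (V (c,k,j) \<omega>)) = distr M borel (\<lambda>\<omega>. f (V (c,0,1) \<omega>))"
proof -
  have "distr M borel (\<lambda>\<omega>. f (V (c,k,j) \<omega>)) = distr (distr M borel (V (c,k,j))) borel f"
    using distr_distr[OF f Vm] by (simp add: comp_def)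
  also have "\<dots> = distr (distr M borel (V (c,0,1))) borel f" by (simp only: distr_V[OF c j])
  also have "\<dots> = distr M borel (\<lambda>\<omega>. f (V (c,0,1) \<omega>))"
    using distr_distr[OF f Vm] by (simp add: comp_def)
  finally show ?thesis .
qed

lemma hoeff:
  assumes c: "c < 3" and I: "finite I" "I \<noteq> {}" "\<forall>j\<in>I. 1 \<le> j"
    and f: "f \<in> borel_measurable borel"
    and ae: "AE \<omega> in M. f (V (c,0,1) \<omega>) \<in> {lo..hi}" and ab: "lo < hi" and eta: "0 \<le> \<eta>"
  shows "prob {\<omega>\<in>space M. (\<Sum>j\<in>I. f (V (c,k,j) \<omega>)) / real (card I) \<le> expectation (\<lambda>\<omega>. f (V (c,0,1) \<omega>)) - \<eta>}
            \<le> exp (-2 * real (card I) * \<eta>\<^sup>2 / (hi - lo)\<^sup>2)" (is ?A)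
    and "prob {\<omega>\<in>space M. (\<Sum>j\<in>I. f (V (c,k,j) \<omega>)) / real (card I) \<ge> expectation (\<lambda>\<omega>. f (V (c,0,1) \<omega>)) + \<eta>}
            \<le> exp (-2 * real (card I) * \<eta>\<^sup>2 / (hi - lo)\<^sup>2)" (is ?B)
proof -
  define T where "T = (\<lambda>j. (c,k,j)) ` I"
  have inj: "inj_on (\<lambda>j. (c,k,j)) I" by (auto simp: inj_on_def)
  have T: "finite T" "T \<noteq> {}" using I by (auto simp: T_def)
  have Tsub: "T \<subseteq> var_index" using I c by (auto simp: T_def var_index_def)
  have indT: "indep_vars (\<lambda>_. borel) (\<lambda>i \<omega>. f (V i \<omega>)) T"
    by (rule indep_vars_compose2[OF indep_vars_subset[OF indepV Tsub]]) (rule f)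
  have Ym: "(\<lambda>\<omega>. f (V (c,0,1) \<omega>)) \<in> borel_measurable M"
    using measurable_compose[OF Vm f] .
  interpret H: Hoeffding_ineq_iid M T "\<lambda>i \<omega>. f (V i \<omega>)" "\<lambda>\<omega>. f (V (c,0,1) \<omega>)" lo hi "expectation (\<lambda>\<omega>. f (V (c,0,1) \<omega>))"
  proof unfold_locales
    show "finite T" by (rule T(1))
    show "indep_vars (\<lambda>_. borel) (\<lambda>i \<omega>. f (V i \<omega>)) T" by (rule indT)
    show "distr M borel (\<lambda>\<omega>. f (V i \<omega>)) = distr M borel (\<lambda>\<omega>. f (V (c,0,1) \<omega>))" if "i \<in> T" for i
    proof -
      from that obtain j where j: "j \<in> I" "i = (c,k,j)" by (auto simp: T_def)
      then have "1 \<le> j" using I by auto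
      from distr_fV[OF c this f, of k] show ?thesis using j by simp
    qed
    show "(\<lambda>\<omega>. f (V (c,0,1) \<omega>)) \<in> borel_measurable M" by (rule Ym)
    show "AE \<omega> in M. f (V (c,0,1) \<omega>) \<in> {lo..hi}" by (rule ae)
  qed (rule reflexive)
  have sr: "(\<Sum>i\<in>T. f (V i \<omega>)) = (\<Sum>j\<in>I. f (V (c,k,j) \<omega>))" for \<omega>
    unfolding T_def by (simp add: sum.reindex[OF inj])
  have cT: "card T = card I" unfolding T_def using card_image[OF inj] .
  show ?A using H.Hoeffding_ineq_le'[OF eta ab T(2)] by (simp add: sr cT)
  show ?B using H.Hoeffding_ineq_ge'[OF eta ab T(2)] by (simp add: sr cT)
qed

end

lemma exp_neg_le_inv: "0 < (x::real) \<Longrightarrow> exp (- x) \<le> 1 / x"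
proof -
  assume x: "0 < x"
  have "x \<le> exp x" using exp_ge_add_one_self[of x] by linarith
  then have "1 / exp x \<le> 1 / x" using x by (intro divide_left_mono) auto
  then show ?thesis by (simp add: exp_minus field_simps)
qed

context gw begin

lemma set_div_le_meas:
  fixes f :: "'a \<Rightarrow> real"
  assumes "f \<in> borel_measurable M"
  shows "{\<omega>\<in>space M. f \<omega> / c \<le> d} \<in> sets M" "{\<omega>\<in>space M. f \<omega> / c \<ge> d} \<in> sets M"
proof -
  have fm: "(\<lambda>\<omega>. f \<omega> / c) \<in> borel_measurable M"
    by (rule borel_measurable_divide[OF assms borel_measurable_const])
  show "{\<omega>\<in>space M. f \<omega> / c \<le> d} \<in> sets M"
    by (rule borel_measurable_le[OF fm borel_measurable_const])
  show "{\<omega>\<in>space M. f \<omega> / c \<ge> d} \<in> sets M"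
    by (rule borel_measurable_le[OF borel_measurable_const fm])
qed

lemma hoeffD:
  assumes n: "1 \<le> n" and ae: "AE \<omega> in M. real (D 0 1 \<omega>) \<in> {0..B}" and B: "0 < B" and eta: "0 \<le> \<eta>"
  shows "prob {\<omega>\<in>space M. (\<Sum>j\<in>{1..n}. real (D k j \<omega>)) / real n \<le> expectation (\<lambda>\<omega>. real (D 0 1 \<omega>)) - \<eta>}
           \<le> exp (- 2 * real n * \<eta>\<^sup>2 / B\<^sup>2)" (is ?A)
    and "prob {\<omega>\<in>space M. (\<Sum>j\<in>{1..n}. real (D k j \<omega>)) / real n \<ge> expectation (\<lambda>\<omega>. real (D 0 1 \<omega>)) + \<eta>}
           \<le> exp (- 2 * real n * \<eta>\<^sup>2 / B\<^sup>2)" (is ?B)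
proof -
  have ae': "AE \<omega> in M. (\<lambda>x. x) (V (0,0,1) \<omega>) \<in> {0..B}" using ae by (simp only: V0')
  have I: "finite {1..n}" "{1..n} \<noteq> {}" "\<forall>j\<in>{1..n}. 1 \<le> j" using n by auto
  have c3: "(0::nat) < 3" "(1::nat) < 3" "(2::nat) < 3" by simp_all
  have idm: "(\<lambda>x::real. x) \<in> borel_measurable borel" by simp
  note h = hoeff[where c=0 and I="{1..n}" and f="\<lambda>x. x" and lo=0 and hi=B and \<eta>=\<eta> and k=k, OF c3(1) I idm ae' B eta]
  show ?A using h(1) by (simp only: V0' card_atLeastAtMost diff_Suc_1 diff_zero)
  show ?B using h(2) by (simp only: V0' card_atLeastAtMost diff_Suc_1 diff_zero)
qed

lemma hoeffR:
  assumes n: "1 \<le> n" and ae: "AE \<omega> in M. R 0 1 \<omega> \<in> {0..B}" and B: "0 < B" and eta: "0 \<le> \<eta>"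
  shows "prob {\<omega>\<in>space M. (\<Sum>j\<in>{1..n}. R k j \<omega>) / real n \<le> expectation (R 0 1) - \<eta>}
           \<le> exp (- 2 * real n * \<eta>\<^sup>2 / B\<^sup>2)"
proof -
  have ae': "AE \<omega> in M. (\<lambda>x. x) (V (2,0,1) \<omega>) \<in> {0..B}" using ae by (simp only: V2)
  have I: "finite {1..n}" "{1..n} \<noteq> {}" "\<forall>j\<in>{1..n}. 1 \<le> j" using n by auto
  have c3: "(0::nat) < 3" "(1::nat) < 3" "(2::nat) < 3" by simp_all
  have idm: "(\<lambda>x::real. x) \<in> borel_measurable borel" by simp
  note h = hoeff[where c=2 and I="{1..n}" and f="\<lambda>x. x" and lo=0 and hi=B and \<eta>=\<eta> and k=k, OF c3(3) I idm ae' B eta]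
  show ?thesis using h(1) by (simp only: V2 card_atLeastAtMost diff_Suc_1 diff_zero)
qed

lemma hoeffX:
  assumes n: "1 \<le> n" and ae: "AE \<omega> in M. f (X 0 1 \<omega>) \<in> {0..B}" and B: "0 < B" and eta: "0 \<le> \<eta>"
    and f: "f \<in> borel_measurable borel"
  shows "prob {\<omega>\<in>space M. (\<Sum>j\<in>{1..n}. f (X k j \<omega>)) / real n \<le> expectation (\<lambda>\<omega>. f (X 0 1 \<omega>)) - \<eta>}
           \<le> exp (- 2 * real n * \<eta>\<^sup>2 / B\<^sup>2)" (is ?A)
    and "prob {\<omega>\<in>space M. (\<Sum>j\<in>{1..n}. f (X k j \<omega>)) / real n \<ge> expectation (\<lambda>\<omega>. f (X 0 1 \<omega>)) + \<eta>}
           \<le> exp (- 2 * real n * \<eta>\<^sup>2 / B\<^sup>2)" (is ?B)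
proof -
  have ae': "AE \<omega> in M. f (V (1,0,1) \<omega>) \<in> {0..B}" using ae by (simp only: V1')
  have I: "finite {1..n}" "{1..n} \<noteq> {}" "\<forall>j\<in>{1..n}. 1 \<le> j" using n by auto
  have c3: "(0::nat) < 3" "(1::nat) < 3" "(2::nat) < 3" by simp_all
  have idm: "(\<lambda>x::real. x) \<in> borel_measurable borel" by simp
  note h = hoeff[where c=1 and I="{1..n}" and f=f and lo=0 and hi=B and \<eta>=\<eta> and k=k, OF c3(2) I f ae' B eta]
  show ?A using h(1) by (simp only: V1' card_atLeastAtMost diff_Suc_1 diff_zero)
  show ?B using h(2) by (simp only: V1' card_atLeastAtMost diff_Suc_1 diff_zero)
qed

end

lemma card_sum_if: "finite A \<Longrightarrow> real (card {k\<in>A. P k}) = (\<Sum>k\<in>A. if P k then 1 else 0)"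
  by (simp add: sum.If_cases Int_def)

context gw begin

lemma step_bound:
  fixes Q :: "real \<Rightarrow> bool" and sel :: "nat \<Rightarrow> (nat \<Rightarrow> real) \<Rightarrow> real \<Rightarrow> nat"
  assumes lbsel: "\<And>t x s. (\<forall>j\<in>{1..t}. 0 \<le> x j) \<Longrightarrow> (\<Sum>j\<in>{j\<in>{1..t}. Q (x j)}. x j) \<le> s \<Longrightarrow>
        card {j\<in>{1..t}. Q (x j)} \<le> sel t x s"
    and Qm: "{x. Q x} \<in> sets borel"
    and B1: "1 \<le> B" and Bae: "AE \<omega> in M. real (D 0 1 \<omega>) \<le> B \<and> X 0 1 \<omega> \<le> B \<and> R 0 1 \<omega> \<le> B"
    and m1: "1 < mm" and mdef: "mm = expectation (\<lambda>\<omega>. real (D 0 1 \<omega>))"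
    and qdef: "q = expectation (\<lambda>\<omega>. if Q (X 0 1 \<omega>) then 1 else 0)"
    and edef: "e = expectation (\<lambda>\<omega>. if Q (X 0 1 \<omega>) then X 0 1 \<omega> else 0)"
    and rdef: "rr = expectation (R 0 1)"
    and g0: "0 < g" and gq: "g < mm * q" and er: "mm * e < rr"
  shows "\<exists>K. \<forall>k w. 1 \<le> w \<longrightarrow>
     prob {\<omega>\<in>space M. real (sel (Dsum D k w \<omega>) (\<lambda>j. X k j \<omega>) (Rsum R k w \<omega>)) \<le> g * real w} \<le> K / real w"
proof -
  have q0: "0 < q"
  proof (rule ccontr)
    assume "\<not> 0 < q"
    then have "mm * q \<le> 0" using m1 by (intro mult_nonneg_nonpos) auto
    then show False using g0 gq by linarith
  qed
  have e0: "0 \<le> e" unfolding edef by (rule Bochner_Integration.integral_nonneg) (auto simp: Xnn)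
  have t1: "((\<lambda>\<eta>. (q - \<eta>) * (mm - \<eta>)) \<longlongrightarrow> (q - 0) * (mm - 0)) (at_right (0::real))"
    by (intro tendsto_intros)
  have t2: "((\<lambda>\<eta>. (e + \<eta>) * (mm + \<eta>) + \<eta>) \<longlongrightarrow> (e + 0) * (mm + 0) + 0) (at_right (0::real))"
    by (intro tendsto_intros)
  have t3: "((\<lambda>\<eta>::real. \<eta>) \<longlongrightarrow> 0) (at_right (0::real))" by (intro tendsto_intros)
  have ev1: "eventually (\<lambda>\<eta>. g < (q - \<eta>) * (mm - \<eta>)) (at_right 0)"
    using order_tendstoD(1)[OF t1, of g] gq by (simp add: mult.commute)
  have ev2: "eventually (\<lambda>\<eta>. (e + \<eta>) * (mm + \<eta>) + \<eta> < rr) (at_right 0)"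
    using order_tendstoD(2)[OF t2, of rr] er by (simp add: mult.commute)
  have ev3: "eventually (\<lambda>\<eta>. \<eta> < q) (at_right 0)" using order_tendstoD(2)[OF t3, of q] q0 by simp
  have ev4: "eventually (\<lambda>\<eta>. \<eta> < mm - 1) (at_right 0)" using order_tendstoD(2)[OF t3, of "mm - 1"] m1 by simp
  have ev5: "eventually (\<lambda>\<eta>. 0 < \<eta>) (at_right (0::real))" by (rule eventually_at_right_less)
  have "eventually (\<lambda>\<eta>. g < (q - \<eta>) * (mm - \<eta>) \<and> (e + \<eta>) * (mm + \<eta>) + \<eta> < rr \<and> \<eta> < q \<and> \<eta> < mm - 1 \<and> 0 < \<eta>) (at_right 0)"
    using ev1 ev2 ev3 ev4 ev5 by (intro eventually_conj)
  then obtain \<eta> where eta1: "g < (q - \<eta>) * (mm - \<eta>)" and eta2: "(e + \<eta>) * (mm + \<eta>) + \<eta> < rr"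
      and eta3: "\<eta> < q" and eta4: "\<eta> < mm - 1" and eta5: "0 < \<eta>"
    using eventually_happens'[OF trivial_limit_at_right_real] by blast
  have eta0: "0 \<le> \<eta>" using eta5 by simp
  define K where "K = 5 * (B\<^sup>2 / (2 * \<eta>\<^sup>2))"
  have B0: "0 < B" using B1 by simp
  have aeD: "AE \<omega> in M. real (D 0 1 \<omega>) \<in> {0..B}" using Bae by eventually_elim auto
  have aeX: "AE \<omega> in M. X 0 1 \<omega> \<in> {0..B}" using Bae AE_space by eventually_elim (auto simp: Xnn)
  have aeR: "AE \<omega> in M. R 0 1 \<omega> \<in> {0..B}" using Bae AE_space by eventually_elim (auto simp: Rnn)
  have aeQ: "AE \<omega> in M. (if Q (X 0 1 \<omega>) then 1 else 0::real) \<in> {0..B}" using B1 by (intro AE_I2) auto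
  have aeXQ: "AE \<omega> in M. (if Q (X 0 1 \<omega>) then X 0 1 \<omega> else 0::real) \<in> {0..B}" using aeX by eventually_elim auto
  have f1m: "(\<lambda>x::real. if Q x then 1 else 0::real) \<in> borel_measurable borel"
    by (rule measurable_If[OF borel_measurable_const borel_measurable_const]) (use Qm in simp)
  have f2m: "(\<lambda>x::real. if Q x then x else 0::real) \<in> borel_measurable borel"
    by (rule measurable_If[OF measurable_ident_sets[OF refl] borel_measurable_const]) (use Qm in simp)
  show ?thesis
  proof (intro exI allI impI)
    fix k w :: nat assume w1: "1 \<le> w"
    have w0: "0 < real w" using w1 by simp
    define \<beta> where "\<beta> = B\<^sup>2 / (2 * \<eta>\<^sup>2) / real w"
    have hb: "exp (- 2 * real n * \<eta>\<^sup>2 / B\<^sup>2) \<le> \<beta>" if "w \<le> n" for n :: nat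
    proof -
      have "2 * real w * \<eta>\<^sup>2 / B\<^sup>2 \<le> 2 * real n * \<eta>\<^sup>2 / B\<^sup>2"
        using that by (intro divide_right_mono mult_right_mono) auto
      then have "exp (- 2 * real n * \<eta>\<^sup>2 / B\<^sup>2) \<le> exp (- (2 * real w * \<eta>\<^sup>2 / B\<^sup>2))"
        by (intro exp_mono) simp
      also have "\<dots> \<le> 1 / (2 * real w * \<eta>\<^sup>2 / B\<^sup>2)" using w0 eta5 B0 by (intro exp_neg_le_inv) simp
      also have "\<dots> = \<beta>" unfolding \<beta>_def using B0 eta5 w0 by (simp add: field_simps)
      finally show ?thesis .
    qed
    define a where "a = nat \<lceil>(mm - \<eta>) * real w\<rceil>"
    define b where "b = nat \<lfloor>(mm + \<eta>) * real w\<rfloor>"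
    have ya: "real w \<le> (mm - \<eta>) * real w" using mult_right_mono[of 1 "mm - \<eta>" "real w"] eta4 by simp
    have yb: "real w \<le> (mm + \<eta>) * real w" using mult_right_mono[of 1 "mm + \<eta>" "real w"] eta5 m1 by simp
    have a_ge: "(mm - \<eta>) * real w \<le> real a" "w \<le> a"
    proof -
      have c1: "(mm - \<eta>) * real w \<le> of_int \<lceil>(mm - \<eta>) * real w\<rceil>" by (rule le_of_int_ceiling)
      then have "(0::real) \<le> of_int \<lceil>(mm - \<eta>) * real w\<rceil>" using ya w0 by linarith
      then have "0 \<le> \<lceil>(mm - \<eta>) * real w\<rceil>" by simp
      then have ra: "real a = of_int \<lceil>(mm - \<eta>) * real w\<rceil>" unfolding a_def by simp
      show "(mm - \<eta>) * real w \<le> real a" using c1 ra by simp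
      then have "real w \<le> real a" using ya by linarith
      then show "w \<le> a" by simp
    qed
    have b_ge: "real b \<le> (mm + \<eta>) * real w" "w \<le> b"
    proof -
      have "int w \<le> \<lfloor>(mm + \<eta>) * real w\<rfloor>" using yb by (simp add: le_floor_iff)
      then have fb: "0 \<le> \<lfloor>(mm + \<eta>) * real w\<rfloor>" "w \<le> b" unfolding b_def by linarith+
      then have rb: "real b = of_int \<lfloor>(mm + \<eta>) * real w\<rfloor>" unfolding b_def by simp
      show "real b \<le> (mm + \<eta>) * real w" using rb by simp
      show "w \<le> b" by (rule fb(2))
    qed
    have a1: "1 \<le> a" and b1: "1 \<le> b" using a_ge(2) b_ge(2) w1 by auto
    define E1 where "E1 = {\<omega>\<in>space M. (\<Sum>j\<in>{1..w}. real (D k j \<omega>)) / real w \<le> mm - \<eta>}"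
    define E2 where "E2 = {\<omega>\<in>space M. (\<Sum>j\<in>{1..w}. real (D k j \<omega>)) / real w \<ge> mm + \<eta>}"
    define E3 where "E3 = {\<omega>\<in>space M. (\<Sum>j\<in>{1..a}. if Q (X k j \<omega>) then 1 else 0) / real a \<le> q - \<eta>}"
    define E4 where "E4 = {\<omega>\<in>space M. (\<Sum>j\<in>{1..b}. if Q (X k j \<omega>) then X k j \<omega> else 0) / real b \<ge> e + \<eta>}"
    define E5 where "E5 = {\<omega>\<in>space M. (\<Sum>j\<in>{1..w}. R k j \<omega>) / real w \<le> rr - \<eta>}"
    have pE1: "prob E1 \<le> \<beta>"
      using hoeffD(1)[OF w1 aeD B0 eta0, where k=k] hb[OF order_refl] unfolding E1_def mdef by linarith
    have pE2: "prob E2 \<le> \<beta>"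
      using hoeffD(2)[OF w1 aeD B0 eta0, where k=k] hb[OF order_refl] unfolding E2_def mdef by linarith
    have pE3: "prob E3 \<le> \<beta>"
      using hoeffX(1)[where f="\<lambda>x. if Q x then 1 else 0" and k=k, OF a1 aeQ B0 eta0 f1m] hb[OF a_ge(2)]
      unfolding E3_def qdef by linarith
    have pE4: "prob E4 \<le> \<beta>"
      using hoeffX(2)[where f="\<lambda>x. if Q x then x else 0" and k=k, OF b1 aeXQ B0 eta0 f2m] hb[OF b_ge(2)]
      unfolding E4_def edef by linarith
    have pE5: "prob E5 \<le> \<beta>"
      using hoeffR[OF w1 aeR B0 eta0, where k=k] hb[OF order_refl] unfolding E5_def rdef by linarith
    have mD: "(\<lambda>\<omega>. \<Sum>j\<in>{1..w}. real (D k j \<omega>)) \<in> borel_measurable M"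
      by (intro borel_measurable_sum real_nat_meas[OF Dm])
    have mQ: "(\<lambda>\<omega>. \<Sum>j\<in>{1..a}. if Q (X k j \<omega>) then 1 else 0::real) \<in> borel_measurable M"
      by (intro borel_measurable_sum) (rule measurable_compose[OF Xm f1m])
    have mX: "(\<lambda>\<omega>. \<Sum>j\<in>{1..b}. if Q (X k j \<omega>) then X k j \<omega> else 0::real) \<in> borel_measurable M"
      by (intro borel_measurable_sum) (rule measurable_compose[OF Xm f2m])
    have mR: "(\<lambda>\<omega>. \<Sum>j\<in>{1..w}. R k j \<omega>) \<in> borel_measurable M"
      by (intro borel_measurable_sum Rm)
    have mE: "E1 \<in> sets M" "E2 \<in> sets M" "E3 \<in> sets M" "E4 \<in> sets M" "E5 \<in> sets M"
      unfolding E1_def E2_def E3_def E4_def E5_def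
      by (rule set_div_le_meas[OF mD] set_div_le_meas[OF mQ] set_div_le_meas[OF mX] set_div_le_meas[OF mR])+
    define F where "F = {\<omega>\<in>space M. real (sel (Dsum D k w \<omega>) (\<lambda>j. X k j \<omega>) (Rsum R k w \<omega>)) \<le> g * real w}"
    have sub: "F \<subseteq> E1 \<union> E2 \<union> E3 \<union> E4 \<union> E5"
    proof
      fix \<omega> assume \<omega>F: "\<omega> \<in> F"
      then have sp: "\<omega> \<in> space M"
        and fl: "real (sel (Dsum D k w \<omega>) (\<lambda>j. X k j \<omega>) (Rsum R k w \<omega>)) \<le> g * real w"
        unfolding F_def by auto
      show "\<omega> \<in> E1 \<union> E2 \<union> E3 \<union> E4 \<union> E5"
      proof (rule ccontr)
        assume "\<omega> \<notin> E1 \<union> E2 \<union> E3 \<union> E4 \<union> E5"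
        then have n1: "mm - \<eta> < (\<Sum>j\<in>{1..w}. real (D k j \<omega>)) / real w"
          and n2: "(\<Sum>j\<in>{1..w}. real (D k j \<omega>)) / real w < mm + \<eta>"
          and n3: "q - \<eta> < (\<Sum>j\<in>{1..a}. if Q (X k j \<omega>) then 1 else 0) / real a"
          and n4: "(\<Sum>j\<in>{1..b}. if Q (X k j \<omega>) then X k j \<omega> else 0) / real b < e + \<eta>"
          and n5: "rr - \<eta> < (\<Sum>j\<in>{1..w}. R k j \<omega>) / real w"
          using sp unfolding E1_def E2_def E3_def E4_def E5_def by auto
        define t where "t = Dsum D k w \<omega>"
        have rt: "real t = (\<Sum>j\<in>{1..w}. real (D k j \<omega>))" unfolding t_def Dsum_def by simp
        have a0: "0 < real a" and b0: "0 < real b" using a1 b1 by auto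
        have t1: "(mm - \<eta>) * real w < real t" using n1 w0 rt by (simp add: pos_less_divide_eq)
        have t2: "real t < (mm + \<eta>) * real w" using n2 w0 rt by (simp add: pos_divide_less_eq)
        have at: "a \<le> t"
        proof -
          have "\<lceil>(mm - \<eta>) * real w\<rceil> \<le> int t" using t1 by (simp add: ceiling_le_iff)
          then show ?thesis using t1 unfolding a_def by (simp add: nat_le_iff)
        qed
        have tb: "t \<le> b"
        proof -
          have "int t \<le> \<lfloor>(mm + \<eta>) * real w\<rfloor>" using t2 by (simp add: le_floor_iff)
          then show ?thesis using t2 unfolding b_def by (simp add: le_nat_iff)
        qed
        have n3': "(q - \<eta>) * real a < (\<Sum>j\<in>{1..a}. if Q (X k j \<omega>) then 1 else 0)"
          using n3 a0 by (simp add: pos_less_divide_eq)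
        have n4': "(\<Sum>j\<in>{1..b}. if Q (X k j \<omega>) then X k j \<omega> else 0) < (e + \<eta>) * real b"
          using n4 b0 by (simp add: pos_divide_less_eq)
        have n5': "(rr - \<eta>) * real w < (\<Sum>j\<in>{1..w}. R k j \<omega>)"
          using n5 w0 by (simp add: pos_less_divide_eq)
        have cS: "(\<Sum>j\<in>{1..a}. if Q (X k j \<omega>) then 1 else 0) \<le> real (card {j\<in>{1..t}. Q (X k j \<omega>)})"
        proof -
          have "(\<Sum>j\<in>{1..a}. if Q (X k j \<omega>) then 1 else 0) = real (card {j\<in>{1..a}. Q (X k j \<omega>)})"
            by (rule card_sum_if[symmetric]) simp
          also have "card {j\<in>{1..a}. Q (X k j \<omega>)} \<le> card {j\<in>{1..t}. Q (X k j \<omega>)}"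
            using at by (intro card_mono) auto
          then have "real (card {j\<in>{1..a}. Q (X k j \<omega>)}) \<le> real (card {j\<in>{1..t}. Q (X k j \<omega>)})" by simp
          finally show ?thesis .
        qed
        have lbq: "(q - \<eta>) * ((mm - \<eta>) * real w) \<le> (q - \<eta>) * real a"
          using a_ge(1) eta3 by (intro mult_left_mono) auto
        have gwl: "g * real w < (q - \<eta>) * ((mm - \<eta>) * real w)"
          using mult_strict_right_mono[OF eta1 w0] by (simp add: mult.assoc)
        have cgt: "g * real w < real (card {j\<in>{1..t}. Q (X k j \<omega>)})"
          using gwl lbq n3' cS by linarith
        have er2: "(e + \<eta>) * (mm + \<eta>) * real w < (rr - \<eta>) * real w"
          using eta2 w0 by (intro mult_strict_right_mono) auto
        have sS: "(\<Sum>j\<in>{j\<in>{1..t}. Q (X k j \<omega>)}. X k j \<omega>) \<le> Rsum R k w \<omega>"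
        proof -
          have "(\<Sum>j\<in>{j\<in>{1..t}. Q (X k j \<omega>)}. X k j \<omega>) = (\<Sum>j\<in>{1..t}. if Q (X k j \<omega>) then X k j \<omega> else 0)"
            by (rule sum.inter_filter) simp
          also have "\<dots> \<le> (\<Sum>j\<in>{1..b}. if Q (X k j \<omega>) then X k j \<omega> else 0)"
            by (rule sum_mono2) (use tb Xnn[OF sp] in auto)
          also have "\<dots> < (e + \<eta>) * real b" by (rule n4')
          also have "\<dots> \<le> (e + \<eta>) * ((mm + \<eta>) * real w)" using b_ge(1) e0 eta5 by (intro mult_left_mono) auto
          also have "\<dots> < (rr - \<eta>) * real w" using er2 by (simp add: mult.assoc)
          also have "\<dots> < (\<Sum>j\<in>{1..w}. R k j \<omega>)" by (rule n5')
          also have "\<dots> = Rsum R k w \<omega>" by (simp add: Rsum_def)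
          finally show ?thesis by (rule less_imp_le)
        qed
        have "card {j\<in>{1..t}. Q (X k j \<omega>)} \<le> sel t (\<lambda>j. X k j \<omega>) (Rsum R k w \<omega>)"
          by (rule lbsel) (use Xnn[OF sp] sS in auto)
        then have "real (card {j\<in>{1..t}. Q (X k j \<omega>)}) \<le> real (sel t (\<lambda>j. X k j \<omega>) (Rsum R k w \<omega>))"
          by simp
        then show False using cgt fl unfolding t_def by linarith
      qed
    qed
    have U: "prob (A \<union> B') \<le> prob A + prob B'" if "A \<in> sets M" "B' \<in> sets M" for A B'
      by (rule measure_Un_le[OF that])
    have m12: "E1 \<union> E2 \<in> sets M" and m123: "E1 \<union> E2 \<union> E3 \<in> sets M" and m1234: "E1 \<union> E2 \<union> E3 \<union> E4 \<in> sets M"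
      and m12345: "E1 \<union> E2 \<union> E3 \<union> E4 \<union> E5 \<in> sets M"
      using mE by auto
    have "prob F \<le> prob (E1 \<union> E2 \<union> E3 \<union> E4 \<union> E5)" by (rule finite_measure_mono[OF sub m12345])
    moreover have "prob (E1 \<union> E2 \<union> E3 \<union> E4 \<union> E5) \<le> prob E1 + prob E2 + prob E3 + prob E4 + prob E5"
      using U[OF m1234 mE(5)] U[OF m123 mE(4)] U[OF m12 mE(3)] U[OF mE(1) mE(2)] by linarith
    moreover have "5 * \<beta> = K / real w" unfolding K_def \<beta>_def by simp
    ultimately show "prob {\<omega>\<in>space M. real (sel (Dsum D k w \<omega>) (\<lambda>j. X k j \<omega>) (Rsum R k w \<omega>)) \<le> g * real w} \<le> K / real w"
      using pE1 pE2 pE3 pE4 pE5 unfolding F_def by linarith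
  qed
qed

end

context gw begin

lemma ratio_meas:
  assumes f: "f \<in> M \<rightarrow>\<^sub>M count_space UNIV" and h: "h \<in> M \<rightarrow>\<^sub>M count_space UNIV"
  shows "(\<lambda>\<omega>. ratio (f \<omega>) (h \<omega>)) \<in> borel_measurable M"
proof -
  have "(\<lambda>\<omega>. (\<lambda>i \<omega>. ratio i (h \<omega>)) (f \<omega>) \<omega>) \<in> borel_measurable M"
  proof (rule measurable_compose_countable[OF _ f])
    fix i :: nat
    have "ratio i \<in> count_space UNIV \<rightarrow>\<^sub>M borel" by (simp add: measurable_count_space_eq1)
    then show "(\<lambda>\<omega>. ratio i (h \<omega>)) \<in> borel_measurable M" using measurable_compose[OF h] by blast
  qed
  then show ?thesis by simp
qed

lemma assembly:
  assumes sel: "sel = Nsel \<or> sel = Msel" and g1: "1 < g"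
    and Kb: "\<forall>k w. 1 \<le> w \<longrightarrow> prob {\<omega>\<in>space M. real (sel (Dsum D k w \<omega>) (\<lambda>j. X k j \<omega>) (Rsum R k w \<omega>)) \<le> g * real w} \<le> K / real w"
    and eps: "0 < \<epsilon>" and cg: "c' \<le> g" and Lpos: "0 < L" and L1: "K * g / ((g - 1) * \<epsilon>) \<le> L"
  shows "\<forall>n. prob {\<omega>\<in>space M. L \<le> real (gproc sel D X R n \<omega>)} > 0 \<longrightarrow>
     prob ({\<omega>\<in>space M. \<forall>l. c' < ratio (gproc sel D X R (n+l+1) \<omega>) (gproc sel D X R (n+l) \<omega>)}
           \<inter> {\<omega>\<in>space M. L \<le> real (gproc sel D X R n \<omega>)})
       / prob {\<omega>\<in>space M. L \<le> real (gproc sel D X R n \<omega>)} \<ge> 1 - \<epsilon>"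
proof -
  define Z where "Z = gproc sel D X R"
  define step where "step = (\<lambda>k w \<omega>. sel (Dsum D k w \<omega>) (\<lambda>j. X k j \<omega>) (Rsum R k w \<omega>))"
  have Zs: "Z (Suc k) \<omega> = step k (Z k \<omega>) \<omega>" for k \<omega> unfolding Z_def step_def by simp
  have Zm: "Z k \<in> M \<rightarrow>\<^sub>M count_space UNIV" for k unfolding Z_def by (rule gproc_M[OF sel])
  have K0: "0 \<le> K"
  proof -
    have "0 \<le> prob {\<omega>\<in>space M. real (step 0 1 \<omega>) \<le> g * real (1::nat)}" by simp
    also have "\<dots> \<le> K / real (1::nat)" using Kb unfolding step_def by blast
    finally show ?thesis by simp
  qed
  have g0: "0 < g" using g1 by simp
  have "K * g \<le> L * ((g - 1) * \<epsilon>)" using L1 g1 eps by (simp add: pos_divide_le_eq)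
  then have Lb: "K * g / ((g - 1) * L) \<le> \<epsilon>" using g1 Lpos by (simp add: pos_divide_le_eq mult_ac)
  show ?thesis
  proof (intro allI impI)
    fix n assume PE: "0 < prob {\<omega>\<in>space M. L \<le> real (gproc sel D X R n \<omega>)}"
    define E where "E = {\<omega>\<in>space M. L \<le> real (Z n \<omega>)}"
    define G where "G = {\<omega>\<in>space M. \<forall>l. g < ratio (Z (n+l+1) \<omega>) (Z (n+l) \<omega>)}"
    have mE: "E \<in> sets M" unfolding E_def
      using borel_measurable_le[OF borel_measurable_const real_nat_meas[OF Zm]] .
    have mG: "G \<in> sets M" unfolding G_def
      by (rule sets.sets_Collect_countable_All) (rule borel_measurable_less[OF borel_measurable_const ratio_meas[OF Zm Zm]])
    define B where "B = (\<lambda>l. {\<omega>\<in>space M. L \<le> real (Z n \<omega>) \<and> L * g^l \<le> real (Z (n+l) \<omega>) \<and> real (Z (n+l+1) \<omega>) \<le> g * real (Z (n+l) \<omega>)})"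
    define \<kappa> where "\<kappa> = K * prob E / L"
    have sub: "E - G \<subseteq> (\<Union>l. B l)"
    proof
      fix \<omega> assume "\<omega> \<in> E - G"
      then have sp: "\<omega> \<in> space M" and LZ: "L \<le> real (Z n \<omega>)" and ex: "\<exists>l. \<not> g < ratio (Z (n+l+1) \<omega>) (Z (n+l) \<omega>)"
        unfolding E_def G_def by auto
      define l0 where "l0 = (LEAST l. \<not> g < ratio (Z (n+l+1) \<omega>) (Z (n+l) \<omega>))"
      have l0f: "\<not> g < ratio (Z (n+l0+1) \<omega>) (Z (n+l0) \<omega>)" unfolding l0_def by (rule LeastI_ex[OF ex])
      have before: "g < ratio (Z (n+j+1) \<omega>) (Z (n+j) \<omega>)" if "j < l0" for j
        using not_less_Least[OF that[unfolded l0_def]] by blast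
      have grow: "j \<le> l0 \<Longrightarrow> L * g^j \<le> real (Z (n+j) \<omega>)" for j
      proof (induction j)
        case 0 then show ?case using LZ by simp
      next
        case (Suc j)
        then have IH: "L * g^j \<le> real (Z (n+j) \<omega>)" and jl: "j < l0" by auto
        have r: "g < ratio (Z (n+j+1) \<omega>) (Z (n+j) \<omega>)" by (rule before[OF jl])
        have nz: "Z (n+j) \<omega> \<noteq> 0" using r g0 unfolding ratio_def by (auto split: if_splits)
        then have "g < real (Z (n+j+1) \<omega>) / real (Z (n+j) \<omega>)" using r unfolding ratio_def by simp
        then have a: "g * real (Z (n+j) \<omega>) < real (Z (n+j+1) \<omega>)" using nz by (simp add: pos_less_divide_eq)
        have b: "g * (L * g^j) \<le> g * real (Z (n+j) \<omega>)" using IH g0 by (intro mult_left_mono) auto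
        have c: "L * g^Suc j = g * (L * g^j)" by simp
        have d: "n + Suc j = n + j + 1" by simp
        show ?case unfolding c d using a b by linarith
      qed
      have lz: "L * g^l0 \<le> real (Z (n+l0) \<omega>)" by (rule grow) simp
      have "0 < L * g^l0" using Lpos g0 by simp
      then have nz: "Z (n+l0) \<omega> \<noteq> 0" using lz by auto
      then have "real (Z (n+l0+1) \<omega>) / real (Z (n+l0) \<omega>) \<le> g" using l0f unfolding ratio_def by simp
      then have "real (Z (n+l0+1) \<omega>) \<le> g * real (Z (n+l0) \<omega>)" using nz by (simp add: pos_divide_le_eq mult.commute)
      then have "\<omega> \<in> B l0" unfolding B_def using sp LZ lz by simp
      then show "\<omega> \<in> (\<Union>l. B l)" by blast
    qed
    have pB: "prob (B l) \<le> \<kappa> * (1/g)^l" for l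
    proof -
      define k where "k = n + l"
      define A where "A = (\<lambda>w::nat. {\<omega>\<in>space M. L \<le> real (Z n \<omega>) \<and> Z k \<omega> = w \<and> L * g^l \<le> real w})"
      define F where "F = (\<lambda>w::nat. {\<omega>\<in>space M. real (step k w \<omega>) \<le> g * real w})"
      have Zs': "Z (n+l+1) \<omega> = step k (Z k \<omega>) \<omega>" for \<omega> using Zs[of k \<omega>] unfolding k_def by simp
      have Beq: "B l = (\<Union>w. A w \<inter> F w)"
      proof
        show "B l \<subseteq> (\<Union>w. A w \<inter> F w)"
        proof
          fix \<omega> assume "\<omega> \<in> B l"
          then have "\<omega> \<in> A (Z k \<omega>) \<inter> F (Z k \<omega>)" unfolding B_def A_def F_def Zs' k_def by simp
          then show "\<omega> \<in> (\<Union>w. A w \<inter> F w)" by blast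
        qed
        show "(\<Union>w. A w \<inter> F w) \<subseteq> B l"
        proof
          fix \<omega> assume "\<omega> \<in> (\<Union>w. A w \<inter> F w)"
          then obtain w where "\<omega> \<in> A w" "\<omega> \<in> F w" by blast
          then show "\<omega> \<in> B l" unfolding B_def A_def F_def Zs' k_def by auto
        qed
      qed
      have mA: "A w \<in> sets (SG (Past k))" for w
      proof -
        have z1: "Z n \<in> SG (Past k) \<rightarrow>\<^sub>M count_space UNIV" unfolding Z_def by (rule gproc_SG[OF sel]) (simp add: k_def)
        have z2: "Z k \<in> SG (Past k) \<rightarrow>\<^sub>M count_space UNIV" unfolding Z_def by (rule gproc_SG[OF sel]) simp
        have s1: "{\<omega>\<in>space (SG (Past k)). L \<le> real (Z n \<omega>)} \<in> sets (SG (Past k))"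
          using borel_measurable_le[OF borel_measurable_const real_nat_meas[OF z1]] .
        have s2: "Z k -` {w} \<inter> space (SG (Past k)) \<in> sets (SG (Past k))"
          by (rule measurable_sets[OF z2]) simp
        have "A w = (if L * g^l \<le> real w then {\<omega>\<in>space (SG (Past k)). L \<le> real (Z n \<omega>)} \<inter> (Z k -` {w} \<inter> space (SG (Past k))) else {})"
          unfolding A_def space_SG by auto
        then show ?thesis using s1 s2 by auto
      qed
      have mF: "F w \<in> sets (SG (Gen k))" for w
      proof -
        have "(\<lambda>\<omega>. real (step k w \<omega>)) \<in> borel_measurable (SG (Gen k))"
          unfolding step_def by (rule real_nat_meas[OF step_SG[OF sel]])
        from borel_measurable_le[OF this borel_measurable_const, of "g * real w"]
        show ?thesis unfolding F_def space_SG .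
      qed
      have ind: "prob (A w \<inter> F w) = prob (A w) * prob (F w)" for w
        by (rule indep_Past_Gen[OF mA mF])
      have AM: "A w \<in> sets M" and FM: "F w \<in> sets M" for w using mA mF SG_sets_sub by auto
      have Lg: "0 < L * g^l" using Lpos g0 by simp
      have bnd: "prob (A w \<inter> F w) \<le> prob (A w) * (K / (L * g^l))" for w
      proof (cases "L * g^l \<le> real w")
        case True
        then have w1: "1 \<le> w" using Lg by (cases w) auto
        have "prob (F w) \<le> K / real w" using Kb w1 unfolding F_def step_def by blast
        also have "\<dots> \<le> K / (L * g^l)" using True K0 Lg by (intro divide_left_mono) auto
        finally show ?thesis unfolding ind by (intro mult_left_mono) auto
      next
        case False then have "A w = {}" unfolding A_def by auto
        then show ?thesis by simp
      qed
      have disj: "disjoint_family (\<lambda>w. A w \<inter> F w)" unfolding disjoint_family_on_def A_def by auto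
      have disjA: "disjoint_family A" unfolding disjoint_family_on_def A_def by auto
      have s1: "(\<lambda>w. prob (A w \<inter> F w)) sums prob (\<Union>w. A w \<inter> F w)"
        by (rule finite_measure_UNION) (use AM FM disj in auto)
      have s2: "(\<lambda>w. prob (A w)) sums prob (\<Union>w. A w)"
        by (rule finite_measure_UNION) (use AM disjA in auto)
      have "prob (B l) \<le> prob (\<Union>w. A w) * (K / (L * g^l))"
        unfolding Beq by (rule sums_le[OF bnd s1 sums_mult2[OF s2]])
      also have "\<dots> \<le> prob E * (K / (L * g^l))"
      proof (rule mult_right_mono)
        show "prob (\<Union>w. A w) \<le> prob E"
          by (rule finite_measure_mono[OF _ mE]) (auto simp: A_def E_def)
        show "0 \<le> K / (L * g^l)" using K0 Lg by simp
      qed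
      also have "\<dots> = \<kappa> * (1/g)^l" unfolding \<kappa>_def by (simp add: power_one_over)
      finally show ?thesis .
    qed
    have mB: "B l \<in> sets M" for l
    proof -
      have r1: "(\<lambda>\<omega>. real (Z k \<omega>)) \<in> borel_measurable M" for k by (rule real_nat_meas[OF Zm])
      have "{\<omega>\<in>space M. L \<le> real (Z n \<omega>)} \<inter> {\<omega>\<in>space M. L * g^l \<le> real (Z (n+l) \<omega>)} \<inter>
            {\<omega>\<in>space M. real (Z (n+l+1) \<omega>) \<le> g * real (Z (n+l) \<omega>)} \<in> sets M"
        by (intro sets.Int borel_measurable_le r1 borel_measurable_const borel_measurable_times)
      moreover have "B l = {\<omega>\<in>space M. L \<le> real (Z n \<omega>)} \<inter> {\<omega>\<in>space M. L * g^l \<le> real (Z (n+l) \<omega>)} \<inter>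
            {\<omega>\<in>space M. real (Z (n+l+1) \<omega>) \<le> g * real (Z (n+l) \<omega>)}" unfolding B_def by auto
      ultimately show ?thesis by simp
    qed
    have ng: "norm (1/g) < 1" using g1 by simp
    have sumg: "summable (\<lambda>l. \<kappa> * (1/g)^l)" by (rule summable_mult[OF summable_geometric[OF ng]])
    have sumB: "summable (\<lambda>l. prob (B l))"
      by (rule summable_comparison_test[OF _ sumg]) (use pB in auto)
    have "prob (E - G) \<le> prob (\<Union>l. B l)" by (rule finite_measure_mono[OF sub]) (use mB in auto)
    also have "\<dots> \<le> (\<Sum>l. prob (B l))" by (rule finite_measure_subadditive_countably) (use mB sumB in auto)
    also have "\<dots> \<le> (\<Sum>l. \<kappa> * (1/g)^l)" by (rule suminf_le[OF pB sumB sumg])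
    also have "(\<Sum>l. \<kappa> * (1/g)^l) = \<kappa> * (1 / (1 - 1/g))"
      using sums_unique[OF sums_mult[OF geometric_sums[OF ng], of \<kappa>]] by simp
    also have "\<kappa> * (1 / (1 - 1/g)) = prob E * (K * g / ((g - 1) * L))"
      unfolding \<kappa>_def using g1 Lpos by (simp add: field_simps)
    also have "\<dots> \<le> prob E * \<epsilon>" by (rule mult_left_mono[OF Lb]) simp
    finally have dif: "prob (E - G) \<le> prob E * \<epsilon>" .
    have "prob (E - G) = prob E - prob (E \<inter> G)" by (rule finite_measure_Diff'[OF mE mG])
    then have low: "(1 - \<epsilon>) * prob E \<le> prob (G \<inter> E)" using dif by (simp add: Int_commute algebra_simps)
    have PE': "0 < prob E" using PE unfolding E_def Z_def .
    define G' where "G' = {\<omega>\<in>space M. \<forall>l. c' < ratio (Z (n+l+1) \<omega>) (Z (n+l) \<omega>)}"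
    have mG': "G' \<in> sets M" unfolding G'_def
      by (rule sets.sets_Collect_countable_All) (rule borel_measurable_less[OF borel_measurable_const ratio_meas[OF Zm Zm]])
    have "G \<inter> E \<subseteq> G' \<inter> E"
    proof (intro subsetI IntI)
      fix \<omega> assume h: "\<omega> \<in> G \<inter> E"
      then show "\<omega> \<in> E" by simp
      have "\<omega> \<in> space M" "\<forall>l. g < ratio (Z (n+l+1) \<omega>) (Z (n+l) \<omega>)" using h unfolding G_def by auto
      then show "\<omega> \<in> G'" unfolding G'_def using cg order_le_less_trans by blast
    qed
    then have "prob (G \<inter> E) \<le> prob (G' \<inter> E)" by (rule finite_measure_mono) (use mG' mE in auto)
    then have "1 - \<epsilon> \<le> prob (G' \<inter> E) / prob E" using low PE' by (simp add: pos_le_divide_eq)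
    then show "1 - \<epsilon> \<le> prob ({\<omega>\<in>space M. \<forall>l. c' < ratio (gproc sel D X R (n+l+1) \<omega>) (gproc sel D X R (n+l) \<omega>)}
           \<inter> {\<omega>\<in>space M. L \<le> real (gproc sel D X R n \<omega>)}) / prob {\<omega>\<in>space M. L \<le> real (gproc sel D X R n \<omega>)}"
      unfolding G'_def E_def Z_def .
  qed
qed

end

context gw begin

lemma bound_B:
  assumes A: "assumptions_A M D X R"
  shows "\<exists>B. 1 \<le> B \<and> (AE \<omega> in M. real (D 0 1 \<omega>) \<le> B \<and> X 0 1 \<omega> \<le> B \<and> R 0 1 \<omega> \<le> B)"
proof -
  obtain C where C: "\<forall>n k. AE \<omega> in M. real (D n k \<omega>) \<le> C \<and> \<bar>X n k \<omega>\<bar> \<le> C \<and> \<bar>R n k \<omega>\<bar> \<le> C"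
    using A unfolding assumptions_A_def by blast
  have "AE \<omega> in M. real (D 0 1 \<omega>) \<le> max C 1 \<and> X 0 1 \<omega> \<le> max C 1 \<and> R 0 1 \<omega> \<le> max C 1"
    using C[rule_format, of 0 1] by eventually_elim auto
  then show ?thesis by (intro exI[of _ "max C 1"]) auto
qed

lemma part:
  fixes Qf :: "real \<Rightarrow> real \<Rightarrow> bool" and sel :: "nat \<Rightarrow> (nat \<Rightarrow> real) \<Rightarrow> real \<Rightarrow> nat"
  assumes sel: "sel = Nsel \<or> sel = Msel"
    and lbsel: "\<And>u t x s. (\<forall>j\<in>{1..t}. 0 \<le> x j) \<Longrightarrow> (\<Sum>j\<in>{j\<in>{1..t}. Qf u (x j)}. x j) \<le> s \<Longrightarrow>
        card {j\<in>{1..t}. Qf u (x j)} \<le> sel t x s"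
    and Qm: "\<And>u. {x. Qf u x} \<in> sets borel"
    and A: "assumptions_A M D X R"
    and c1: "1 < mD M D * c" and \<delta>: "0 < \<delta>" and \<epsilon>: "0 < \<epsilon>"
    and ex: "\<And>g. 0 < g \<Longrightarrow> g < mD M D * c \<Longrightarrow> \<exists>u.
        g < mD M D * expectation (\<lambda>\<omega>. if Qf u (X 0 1 \<omega>) then 1 else 0) \<and>
        mD M D * expectation (\<lambda>\<omega>. if Qf u (X 0 1 \<omega>) then X 0 1 \<omega> else 0) < rR M R"
  shows "\<exists>L0. \<forall>L\<ge>L0. 0 < L \<and> (\<forall>n. prob {\<omega>\<in>space M. L \<le> real (gproc sel D X R n \<omega>)} > 0 \<longrightarrow>
     prob ({\<omega>\<in>space M. \<forall>l. mD M D * c - \<delta> < ratio (gproc sel D X R (n+l+1) \<omega>) (gproc sel D X R (n+l) \<omega>)}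
           \<inter> {\<omega>\<in>space M. L \<le> real (gproc sel D X R n \<omega>)})
       / prob {\<omega>\<in>space M. L \<le> real (gproc sel D X R n \<omega>)} \<ge> 1 - \<epsilon>)"
proof -
  define mm where "mm = mD M D"
  have m1: "1 < mm" using A unfolding assumptions_A_def mm_def by blast
  define g where "g = mm * c - min \<delta> ((mm * c - 1) / 2)"
  have c1': "1 < mm * c" using c1 unfolding mm_def .
  define z where "z = min \<delta> ((mm * c - 1) / 2)"
  have z1: "2 * z \<le> mm * c - 1" unfolding z_def by (simp add: min_def)
  have z2: "z \<le> \<delta>" unfolding z_def by (rule min.cobounded1)
  have z3: "0 < z" unfolding z_def using c1' \<delta> by simp
  have gz: "g = mm * c - z" unfolding g_def z_def ..
  have g1: "1 < g" unfolding gz using z1 z3 c1' by linarith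
  have gc: "g < mm * c" unfolding gz using z3 by linarith
  have cg: "mm * c - \<delta> \<le> g" unfolding gz using z2 by linarith
  obtain u where u1: "g < mm * expectation (\<lambda>\<omega>. if Qf u (X 0 1 \<omega>) then 1 else 0)"
    and u2: "mm * expectation (\<lambda>\<omega>. if Qf u (X 0 1 \<omega>) then X 0 1 \<omega> else 0) < rR M R"
    using ex[of g] g1 gc unfolding mm_def by auto
  obtain B where B1: "1 \<le> B" and Bae: "AE \<omega> in M. real (D 0 1 \<omega>) \<le> B \<and> X 0 1 \<omega> \<le> B \<and> R 0 1 \<omega> \<le> B"
    using bound_B[OF A] by blast
  have "\<exists>K. \<forall>k w. 1 \<le> w \<longrightarrow>
     prob {\<omega>\<in>space M. real (sel (Dsum D k w \<omega>) (\<lambda>j. X k j \<omega>) (Rsum R k w \<omega>)) \<le> g * real w} \<le> K / real w"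
  proof (rule step_bound[where Q="Qf u" and B=B and mm=mm and q="expectation (\<lambda>\<omega>. if Qf u (X 0 1 \<omega>) then 1 else 0)"
      and e="expectation (\<lambda>\<omega>. if Qf u (X 0 1 \<omega>) then X 0 1 \<omega> else 0)" and rr="rR M R"])
    show "\<And>t x s. (\<forall>j\<in>{1..t}. 0 \<le> x j) \<Longrightarrow> (\<Sum>j\<in>{j\<in>{1..t}. Qf u (x j)}. x j) \<le> s \<Longrightarrow>
        card {j\<in>{1..t}. Qf u (x j)} \<le> sel t x s" by (rule lbsel)
    show "{x. Qf u x} \<in> sets borel" by (rule Qm)
    show "1 \<le> B" by (rule B1)
    show "AE \<omega> in M. real (D 0 1 \<omega>) \<le> B \<and> X 0 1 \<omega> \<le> B \<and> R 0 1 \<omega> \<le> B" by (rule Bae)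
    show "1 < mm" by (rule m1)
    show "mm = expectation (\<lambda>\<omega>. real (D 0 1 \<omega>))" unfolding mm_def mD_def ..
    show "rR M R = expectation (R 0 1)" unfolding rR_def ..
    show "0 < g" using g1 by simp
    show "g < mm * expectation (\<lambda>\<omega>. if Qf u (X 0 1 \<omega>) then 1 else 0)" by (rule u1)
    show "mm * expectation (\<lambda>\<omega>. if Qf u (X 0 1 \<omega>) then X 0 1 \<omega> else 0) < rR M R" by (rule u2)
  qed simp_all
  then obtain K where Kb: "\<forall>k w. 1 \<le> w \<longrightarrow>
     prob {\<omega>\<in>space M. real (sel (Dsum D k w \<omega>) (\<lambda>j. X k j \<omega>) (Rsum R k w \<omega>)) \<le> g * real w} \<le> K / real w"
    by blast
  define L0 where "L0 = max 1 (K * g / ((g - 1) * \<epsilon>))"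
  show ?thesis
  proof (rule exI[of _ L0], rule allI, rule impI, rule conjI)
    fix L assume L: "L0 \<le> L"
    show Lp: "0 < L" using L unfolding L0_def by linarith
    have L1: "K * g / ((g - 1) * \<epsilon>) \<le> L" using L unfolding L0_def by linarith
    show "\<forall>n. prob {\<omega>\<in>space M. L \<le> real (gproc sel D X R n \<omega>)} > 0 \<longrightarrow>
     prob ({\<omega>\<in>space M. \<forall>l. mD M D * c - \<delta> < ratio (gproc sel D X R (n+l+1) \<omega>) (gproc sel D X R (n+l) \<omega>)}
           \<inter> {\<omega>\<in>space M. L \<le> real (gproc sel D X R n \<omega>)})
       / prob {\<omega>\<in>space M. L \<le> real (gproc sel D X R n \<omega>)} \<ge> 1 - \<epsilon>"
      using assembly[OF sel g1 Kb \<epsilon> cg Lp L1] unfolding mm_def .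
  qed
qed

end

context gw begin

lemma setle: "{\<omega>\<in>space M. X 0 1 \<omega> \<le> y} \<in> sets M"
  by (rule borel_measurable_le[OF Xm borel_measurable_const])
lemma setgt: "{\<omega>\<in>space M. y < X 0 1 \<omega>} \<in> sets M"
  by (rule borel_measurable_less[OF borel_measurable_const Xm])

lemma F_mono: assumes "x \<le> y" shows "cdfX M X x \<le> cdfX M X y"
  unfolding cdfX_def using assms by (intro finite_measure_mono[OF _ setle]) auto

lemma F_neg: assumes "x < 0" shows "cdfX M X x = 0"
proof -
  have e: "{\<omega>\<in>space M. X 0 1 \<omega> \<le> x} = {}"
  proof (rule equals0I)
    fix \<omega> assume "\<omega> \<in> {\<omega>\<in>space M. X 0 1 \<omega> \<le> x}"
    then have "\<omega> \<in> space M" "X 0 1 \<omega> \<le> x" by auto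
    with Xnn[of \<omega> 0 1] assms show False by linarith
  qed
  show ?thesis unfolding cdfX_def e by simp
qed

lemma F_nonneg: "0 \<le> cdfX M X x" unfolding cdfX_def by simp

lemma F_zero:
  assumes cont: "\<And>x. isCont (cdfX M X) x" and x: "x \<le> 0"
  shows "cdfX M X x = 0"
proof (cases "x < 0")
  case True then show ?thesis by (rule F_neg)
next
  case False then have x0: "x = 0" using x by simp
  have "(cdfX M X \<longlongrightarrow> cdfX M X 0) (at 0)" using cont[of 0] by (simp add: continuous_at)
  then have t1: "(cdfX M X \<longlongrightarrow> cdfX M X 0) (at_left 0)" by (simp add: filterlim_at_split)
  have ev: "eventually (\<lambda>y. cdfX M X y = 0) (at_left (0::real))"
    unfolding eventually_at_left_field by (intro exI[of _ "-1"]) (auto intro: F_neg)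
  have t2: "(cdfX M X \<longlongrightarrow> 0) (at_left 0)" using tendsto_eventually[OF ev] by simp
  have "cdfX M X 0 = 0" by (rule tendsto_unique[OF _ t1 t2]) simp
  then show ?thesis using x0 by simp
qed

lemma F_one:
  assumes "AE \<omega> in M. X 0 1 \<omega> \<le> B" shows "cdfX M X B = 1"
  unfolding cdfX_def using prob_Collect_eq_1[OF setle, of B] assms by simp

lemma int_ind:
  assumes S: "{\<omega>\<in>space M. P \<omega>} \<in> sets M"
  shows "integrable M (\<lambda>\<omega>. if P \<omega> then 1 else 0::real)"
    and "expectation (\<lambda>\<omega>. if P \<omega> then 1 else 0::real) = prob {\<omega>\<in>space M. P \<omega>}"
proof -
  have m: "(\<lambda>\<omega>. if P \<omega> then 1 else 0::real) \<in> borel_measurable M"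
    by (rule measurable_If[OF borel_measurable_const borel_measurable_const S])
  show "integrable M (\<lambda>\<omega>. if P \<omega> then 1 else 0::real)"
    by (rule integrable_const_bound[where B=1, OF _ m]) (intro AE_I2, simp)
  have "expectation (\<lambda>\<omega>. if P \<omega> then 1 else 0::real) = expectation (indicator {\<omega>\<in>space M. P \<omega>})"
    by (rule Bochner_Integration.integral_cong) (auto simp: indicator_def)
  also have "\<dots> = prob {\<omega>\<in>space M. P \<omega>}" by (simp add: Int_absorb2)
  finally show "expectation (\<lambda>\<omega>. if P \<omega> then 1 else 0::real) = prob {\<omega>\<in>space M. P \<omega>}" .
qed

lemma int_X:
  assumes S: "{\<omega>\<in>space M. P \<omega>} \<in> sets M" and IX: "integrable M (X 0 1)"
  shows "integrable M (\<lambda>\<omega>. if P \<omega> then X 0 1 \<omega> else 0)"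
proof (rule Bochner_Integration.integrable_bound[OF IX])
  show "(\<lambda>\<omega>. if P \<omega> then X 0 1 \<omega> else 0) \<in> borel_measurable M"
    by (rule measurable_If[OF Xm borel_measurable_const S])
  show "AE \<omega> in M. norm (if P \<omega> then X 0 1 \<omega> else 0) \<le> norm (X 0 1 \<omega>)" by (intro AE_I2) auto
qed

lemma tau_conv:
  "(\<integral>x. x * indicator {0..\<tau>} x \<partial>lawX M X) = expectation (\<lambda>\<omega>. if X 0 1 \<omega> \<le> \<tau> then X 0 1 \<omega> else 0)"
proof -
  have fm: "(\<lambda>x::real. x * indicator {0..\<tau>} x) \<in> borel_measurable borel" by simp
  have "(\<integral>x. x * indicator {0..\<tau>} x \<partial>lawX M X) = expectation (\<lambda>\<omega>. X 0 1 \<omega> * indicator {0..\<tau>} (X 0 1 \<omega>))"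
    unfolding lawX_def by (rule integral_distr[OF Xm fm])
  also have "\<dots> = expectation (\<lambda>\<omega>. if X 0 1 \<omega> \<le> \<tau> then X 0 1 \<omega> else 0)"
    by (rule Bochner_Integration.integral_cong) (auto simp: indicator_def Xnn)
  finally show ?thesis .
qed

lemma theta_conv:
  "(\<integral>x. x * indicator {\<theta>..b} x \<partial>lawX M X) = expectation (\<lambda>\<omega>. if \<theta> \<le> X 0 1 \<omega> \<and> X 0 1 \<omega> \<le> b then X 0 1 \<omega> else 0)"
proof -
  have fm: "(\<lambda>x::real. x * indicator {\<theta>..b} x) \<in> borel_measurable borel" by simp
  have "(\<integral>x. x * indicator {\<theta>..b} x \<partial>lawX M X) = expectation (\<lambda>\<omega>. X 0 1 \<omega> * indicator {\<theta>..b} (X 0 1 \<omega>))"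
    unfolding lawX_def by (rule integral_distr[OF Xm fm])
  also have "\<dots> = expectation (\<lambda>\<omega>. if \<theta> \<le> X 0 1 \<omega> \<and> X 0 1 \<omega> \<le> b then X 0 1 \<omega> else 0)"
    by (rule Bochner_Integration.integral_cong) (auto simp: indicator_def)
  finally show ?thesis .
qed

lemma A_facts:
  assumes A: "assumptions_A M D X R"
  shows "\<And>x. isCont (cdfX M X) x" "integrable M (X 0 1)" "1 < mD M D" "0 < muX M X"
  using A unfolding assumptions_A_def by blast+

lemma ex_wf:
  assumes A: "assumptions_A M D X R"
    and tau: "rR M R \<le> mD M D * muX M X \<Longrightarrow> (\<integral>x. x * indicator {0..\<tau>} x \<partial>lawX M X) = rR M R / mD M D"
    and g0: "0 < g" and gl: "g < mD M D * (if rR M R \<le> mD M D * muX M X then cdfX M X \<tau> else 1)"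
  shows "\<exists>u. g < mD M D * expectation (\<lambda>\<omega>. if X 0 1 \<omega> \<le> u then 1 else 0) \<and>
    mD M D * expectation (\<lambda>\<omega>. if X 0 1 \<omega> \<le> u then X 0 1 \<omega> else 0) < rR M R"
proof -
  define m where "m = mD M D"
  define r where "r = rR M R"
  define F where "F = cdfX M X"
  note cont = A_facts(1)[OF A] and IX = A_facts(2)[OF A]
  have m1: "1 < m" using A_facts(3)[OF A] unfolding m_def .
  have m0: "0 < m" using m1 by simp
  have q_eq: "expectation (\<lambda>\<omega>. if X 0 1 \<omega> \<le> u then 1 else 0::real) = F u" for u
    unfolding F_def cdfX_def by (rule int_ind(2)[OF setle])
  have ii: "integrable M (\<lambda>\<omega>. if X 0 1 \<omega> \<le> u then 1 else 0::real)" for u by (rule int_ind(1)[OF setle])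
  have ie: "integrable M (\<lambda>\<omega>. if X 0 1 \<omega> \<le> u then X 0 1 \<omega> else 0)" for u by (rule int_X[OF setle IX])
  obtain B where B1: "1 \<le> B" and Bae: "AE \<omega> in M. real (D 0 1 \<omega>) \<le> B \<and> X 0 1 \<omega> \<le> B \<and> R 0 1 \<omega> \<le> B"
    using bound_B[OF A] by blast
  have aeB: "AE \<omega> in M. X 0 1 \<omega> \<le> B" using Bae by eventually_elim auto
  show ?thesis
  proof (cases "rR M R \<le> mD M D * muX M X")
    case True
    have gl': "g < m * F \<tau>" using gl True unfolding m_def F_def by simp
    have et: "expectation (\<lambda>\<omega>. if X 0 1 \<omega> \<le> \<tau> then X 0 1 \<omega> else 0) = r / m"
      using tau[OF True] tau_conv unfolding r_def m_def by simp
    have gm: "g / m < F \<tau>" using gl' m0 by (simp add: pos_divide_less_eq mult.commute)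
    have gm0: "0 < g / m" using g0 m0 by simp
    define l1 where "l1 = (g / m + F \<tau>) / 2"
    have h1: "2 * l1 = g / m + F \<tau>" unfolding l1_def by simp
    have l1a: "g / m < l1" "l1 < F \<tau>" "0 < l1" using h1 gm gm0 by linarith+
    have \<tau>0: "0 \<le> \<tau>"
    proof (rule ccontr)
      assume "\<not> 0 \<le> \<tau>" then have "F \<tau> = 0" unfolding F_def by (intro F_neg) simp
      then show False using l1a by simp
    qed
    have Fm1: "F (-1) = 0" unfolding F_def by (rule F_neg) simp
    have co: "continuous_on S F" for S unfolding F_def by (intro continuous_at_imp_continuous_on ballI cont)
    obtain u where u: "-1 \<le> u" "u \<le> \<tau>" "F u = l1"
      using IVT'[of F "-1" l1 \<tau>, OF _ _ _ co] Fm1 l1a \<tau>0 by force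
    define l2 where "l2 = (l1 + F \<tau>) / 2"
    have h2: "2 * l2 = l1 + F \<tau>" unfolding l2_def by simp
    have l2a: "l1 < l2" "l2 < F \<tau>" using h2 l1a by linarith+
    obtain w0 where w: "u \<le> w0" "w0 \<le> \<tau>" "F w0 = l2"
      using IVT'[of F u l2 \<tau>, OF _ _ _ co] u l2a by force
    have w0p: "0 < w0"
    proof (rule ccontr)
      assume "\<not> 0 < w0" then have "F w0 = 0" unfolding F_def by (intro F_zero cont) simp
      then show False using w l2a l1a by simp
    qed
    have int2: "integrable M (\<lambda>\<omega>. w0 * ((if X 0 1 \<omega> \<le> \<tau> then 1 else 0) - (if X 0 1 \<omega> \<le> w0 then 1 else 0::real)))"
      by (intro Bochner_Integration.integrable_mult_right Bochner_Integration.integrable_diff ii)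
    have ineq: "expectation (\<lambda>\<omega>. (if X 0 1 \<omega> \<le> u then X 0 1 \<omega> else 0) +
          w0 * ((if X 0 1 \<omega> \<le> \<tau> then 1 else 0) - (if X 0 1 \<omega> \<le> w0 then 1 else 0)))
        \<le> expectation (\<lambda>\<omega>. if X 0 1 \<omega> \<le> \<tau> then X 0 1 \<omega> else 0)"
    proof (rule Bochner_Integration.integral_mono[OF Bochner_Integration.integrable_add[OF ie int2] ie])
      fix \<omega> assume sp: "\<omega> \<in> space M"
      show "(if X 0 1 \<omega> \<le> u then X 0 1 \<omega> else 0) + w0 * ((if X 0 1 \<omega> \<le> \<tau> then 1 else 0) - (if X 0 1 \<omega> \<le> w0 then 1 else 0))
        \<le> (if X 0 1 \<omega> \<le> \<tau> then X 0 1 \<omega> else 0)"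
        using Xnn[OF sp, of 0 1] w u w0p by auto
    qed
    have lin: "expectation (\<lambda>\<omega>. (if X 0 1 \<omega> \<le> u then X 0 1 \<omega> else 0) +
          w0 * ((if X 0 1 \<omega> \<le> \<tau> then 1 else 0) - (if X 0 1 \<omega> \<le> w0 then 1 else 0)))
        = expectation (\<lambda>\<omega>. if X 0 1 \<omega> \<le> u then X 0 1 \<omega> else 0) + w0 * (F \<tau> - F w0)"
      by (simp only: Bochner_Integration.integral_add[OF ie int2] Bochner_Integration.integral_mult_right[OF Bochner_Integration.integrable_diff[OF ii ii]]
          Bochner_Integration.integral_diff[OF ii ii] q_eq)
    have pos: "0 < w0 * (F \<tau> - F w0)" using w0p w l2a by simp
    have "expectation (\<lambda>\<omega>. if X 0 1 \<omega> \<le> u then X 0 1 \<omega> else 0) < r / m"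
      using ineq lin pos et by linarith
    then have e: "m * expectation (\<lambda>\<omega>. if X 0 1 \<omega> \<le> u then X 0 1 \<omega> else 0) < r"
      using m0 by (simp add: pos_less_divide_eq mult.commute)
    have q: "g < m * F u" using u l1a m0 by (simp add: pos_divide_less_eq mult.commute)
    show ?thesis using e q unfolding m_def r_def q_eq F_def by blast
  next
    case False
    have gl': "g < m" using gl False unfolding m_def by simp
    have FB: "F B = 1" unfolding F_def by (rule F_one[OF aeB])
    have "expectation (\<lambda>\<omega>. if X 0 1 \<omega> \<le> B then X 0 1 \<omega> else 0) \<le> expectation (X 0 1)"
      by (rule Bochner_Integration.integral_mono[OF ie IX]) (auto simp: Xnn)
    then have "m * expectation (\<lambda>\<omega>. if X 0 1 \<omega> \<le> B then X 0 1 \<omega> else 0) \<le> m * muX M X"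
      using m0 unfolding muX_def by simp
    also have "\<dots> < r" using False unfolding m_def r_def by simp
    finally have e: "m * expectation (\<lambda>\<omega>. if X 0 1 \<omega> \<le> B then X 0 1 \<omega> else 0) < r" .
    have q: "g < m * F B" using FB gl' by simp
    show ?thesis using e q unfolding m_def r_def q_eq F_def by blast
  qed
qed

lemma ex_sf:
  assumes A: "assumptions_A M D X R"
    and theta: "rR M R \<le> mD M D * muX M X \<Longrightarrow> (\<integral>x. x * indicator {\<theta>..supp_sup M X} x \<partial>lawX M X) = rR M R / mD M D"
    and g0: "0 < g" and gl: "g < mD M D * (if rR M R \<le> mD M D * muX M X then 1 - cdfX M X \<theta> else 1)"
  shows "\<exists>v. g < mD M D * expectation (\<lambda>\<omega>. if v < X 0 1 \<omega> then 1 else 0) \<and>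
    mD M D * expectation (\<lambda>\<omega>. if v < X 0 1 \<omega> then X 0 1 \<omega> else 0) < rR M R"
proof -
  define m where "m = mD M D"
  define r where "r = rR M R"
  define F where "F = cdfX M X"
  note cont = A_facts(1)[OF A] and IX = A_facts(2)[OF A]
  have m1: "1 < m" using A_facts(3)[OF A] unfolding m_def .
  have m0: "0 < m" using m1 by simp
  have q_eq: "expectation (\<lambda>\<omega>. if v < X 0 1 \<omega> then 1 else 0::real) = 1 - F v" for v
  proof -
    have "expectation (\<lambda>\<omega>. if v < X 0 1 \<omega> then 1 else 0::real) = prob {\<omega>\<in>space M. v < X 0 1 \<omega>}"
      by (rule int_ind(2)[OF setgt])
    also have "{\<omega>\<in>space M. v < X 0 1 \<omega>} = space M - {\<omega>\<in>space M. X 0 1 \<omega> \<le> v}" by auto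
    also have "prob (space M - {\<omega>\<in>space M. X 0 1 \<omega> \<le> v}) = 1 - F v"
      unfolding F_def cdfX_def by (rule prob_compl[OF setle])
    finally show ?thesis .
  qed
  have ie: "integrable M (\<lambda>\<omega>. if v < X 0 1 \<omega> then X 0 1 \<omega> else 0)" for v by (rule int_X[OF setgt IX])
  have il: "integrable M (\<lambda>\<omega>. if X 0 1 \<omega> \<le> y then 1 else 0::real)" for y by (rule int_ind(1)[OF setle])
  have qle: "expectation (\<lambda>\<omega>. if X 0 1 \<omega> \<le> y then 1 else 0::real) = F y" for y
    unfolding F_def cdfX_def by (rule int_ind(2)[OF setle])
  obtain B where B1: "1 \<le> B" and Bae: "AE \<omega> in M. real (D 0 1 \<omega>) \<le> B \<and> X 0 1 \<omega> \<le> B \<and> R 0 1 \<omega> \<le> B"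
    using bound_B[OF A] by blast
  have aeB: "AE \<omega> in M. X 0 1 \<omega> \<le> B" using Bae by eventually_elim auto
  have FB: "F B = 1" unfolding F_def by (rule F_one[OF aeB])
  have co: "continuous_on S F" for S unfolding F_def by (intro continuous_at_imp_continuous_on ballI cont)
  show ?thesis
  proof (cases "rR M R \<le> mD M D * muX M X")
    case True
    define b where "b = supp_sup M X"
    have Fb: "F b = 1"
    proof -
      define S where "S = {x. F x = 1}"
      have cS: "closed S" unfolding S_def by (rule closed_Collect_eq) (use co continuous_on_const in auto)
      have nS: "S \<noteq> {}" using FB unfolding S_def by auto
      have bS: "bdd_below S"
      proof (rule bdd_belowI[of _ 0])
        fix x assume "x \<in> S"
        then have x1: "F x = 1" unfolding S_def by simp
        show "0 \<le> x"
        proof (rule ccontr)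
          assume "\<not> 0 \<le> x" then have "F x = 0" unfolding F_def by (intro F_neg) simp
          with x1 show False by simp
        qed
      qed
      have "Inf S \<in> S" by (rule closed_contains_Inf[OF nS bS cS])
      moreover have "b = Inf S" unfolding b_def supp_sup_def S_def F_def ..
      ultimately show ?thesis unfolding S_def by simp
    qed
    have aeb: "AE \<omega> in M. X 0 1 \<omega> \<le> b"
      using prob_Collect_eq_1[OF setle, of b] Fb unfolding F_def cdfX_def by simp
    have et: "expectation (\<lambda>\<omega>. if \<theta> \<le> X 0 1 \<omega> \<and> X 0 1 \<omega> \<le> b then X 0 1 \<omega> else 0) = r / m"
      using theta[OF True] theta_conv[of \<theta> b] unfolding r_def m_def b_def by simp
    have gl': "g < m * (1 - F \<theta>)" using gl True unfolding m_def F_def by simp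
    have gm: "g / m < 1 - F \<theta>" using gl' m0 by (simp add: pos_divide_less_eq mult.commute)
    have gm0: "0 < g / m" using g0 m0 by simp
    define l1 where "l1 = (F \<theta> + (1 - g / m)) / 2"
    have h1: "2 * l1 = F \<theta> + (1 - g / m)" unfolding l1_def by simp
    have l1a: "F \<theta> < l1" "l1 < 1 - g / m" using h1 gm by linarith+
    have F\<theta>0: "0 \<le> F \<theta>" unfolding F_def by (rule F_nonneg)
    have \<theta>B: "\<theta> \<le> B"
    proof (rule ccontr)
      assume "\<not> \<theta> \<le> B" then have "F B \<le> F \<theta>" unfolding F_def by (intro F_mono) simp
      then show False using FB l1a gm0 by linarith
    qed
    have l1B: "l1 \<le> F B" using FB l1a gm0 by linarith
    obtain v where v: "\<theta> \<le> v" "v \<le> B" "F v = l1"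
      using IVT'[of F \<theta> l1 B, OF _ l1B \<theta>B co] l1a by force
    define l2 where "l2 = (F \<theta> + l1) / 2"
    have h2: "2 * l2 = F \<theta> + l1" unfolding l2_def by simp
    have l2a: "F \<theta> < l2" "l2 < l1" using h2 l1a by linarith+
    obtain w0 where w: "\<theta> \<le> w0" "w0 \<le> v" "F w0 = l2"
      using IVT'[of F \<theta> l2 v, OF _ _ v(1) co] l2a v by force
    have w0p: "0 < w0"
    proof (rule ccontr)
      assume "\<not> 0 < w0" then have "F w0 = 0" unfolding F_def by (intro F_zero cont) simp
      then show False using w l2a F\<theta>0 by linarith
    qed
    have int2: "integrable M (\<lambda>\<omega>. w0 * ((if X 0 1 \<omega> \<le> v then 1 else 0) - (if X 0 1 \<omega> \<le> w0 then 1 else 0::real)))"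
      by (intro Bochner_Integration.integrable_mult_right Bochner_Integration.integrable_diff il)
    have setr: "{\<omega>\<in>space M. \<theta> \<le> X 0 1 \<omega> \<and> X 0 1 \<omega> \<le> b} \<in> sets M"
    proof -
      have "{\<omega>\<in>space M. \<theta> \<le> X 0 1 \<omega> \<and> X 0 1 \<omega> \<le> b} = {\<omega>\<in>space M. \<theta> \<le> X 0 1 \<omega>} \<inter> {\<omega>\<in>space M. X 0 1 \<omega> \<le> b}" by auto
      moreover have "{\<omega>\<in>space M. \<theta> \<le> X 0 1 \<omega>} \<in> sets M" by (rule borel_measurable_le[OF borel_measurable_const Xm])
      ultimately show ?thesis using setle by auto
    qed
    have ir: "integrable M (\<lambda>\<omega>. if \<theta> \<le> X 0 1 \<omega> \<and> X 0 1 \<omega> \<le> b then X 0 1 \<omega> else 0)" by (rule int_X[OF setr IX])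
    have aeineq: "AE \<omega> in M. (if v < X 0 1 \<omega> then X 0 1 \<omega> else 0) + w0 * ((if X 0 1 \<omega> \<le> v then 1 else 0) - (if X 0 1 \<omega> \<le> w0 then 1 else 0))
        \<le> (if \<theta> \<le> X 0 1 \<omega> \<and> X 0 1 \<omega> \<le> b then X 0 1 \<omega> else 0)"
      using aeb AE_space
    proof eventually_elim
      case (elim \<omega>)
      then show ?case using Xnn[of \<omega> 0 1] w v w0p by auto
    qed
    have ineq: "expectation (\<lambda>\<omega>. (if v < X 0 1 \<omega> then X 0 1 \<omega> else 0) + w0 * ((if X 0 1 \<omega> \<le> v then 1 else 0) - (if X 0 1 \<omega> \<le> w0 then 1 else 0)))
        \<le> expectation (\<lambda>\<omega>. if \<theta> \<le> X 0 1 \<omega> \<and> X 0 1 \<omega> \<le> b then X 0 1 \<omega> else 0)"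
      by (rule integral_mono_AE[OF Bochner_Integration.integrable_add[OF ie int2] ir aeineq])
    have lin: "expectation (\<lambda>\<omega>. (if v < X 0 1 \<omega> then X 0 1 \<omega> else 0) + w0 * ((if X 0 1 \<omega> \<le> v then 1 else 0) - (if X 0 1 \<omega> \<le> w0 then 1 else 0)))
        = expectation (\<lambda>\<omega>. if v < X 0 1 \<omega> then X 0 1 \<omega> else 0) + w0 * (F v - F w0)"
      by (simp only: Bochner_Integration.integral_add[OF ie int2] Bochner_Integration.integral_mult_right[OF Bochner_Integration.integrable_diff[OF il il]]
          Bochner_Integration.integral_diff[OF il il] qle)
    have pos: "0 < w0 * (F v - F w0)" using w0p w v l2a by simp
    have "expectation (\<lambda>\<omega>. if v < X 0 1 \<omega> then X 0 1 \<omega> else 0) < r / m"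
      using ineq lin pos et by linarith
    then have e: "m * expectation (\<lambda>\<omega>. if v < X 0 1 \<omega> then X 0 1 \<omega> else 0) < r"
      using m0 by (simp add: pos_less_divide_eq mult.commute)
    have "g / m < 1 - F v" using v l1a by linarith
    then have q: "g < m * (1 - F v)" using m0 by (simp add: pos_divide_less_eq mult.commute)
    show ?thesis using e q unfolding m_def r_def q_eq F_def by blast
  next
    case False
    have gl': "g < m" using gl False unfolding m_def by simp
    have Fm1: "F (-1) = 0" unfolding F_def by (rule F_neg) simp
    have "expectation (\<lambda>\<omega>. if -1 < X 0 1 \<omega> then X 0 1 \<omega> else 0) = expectation (X 0 1)"
    proof (rule Bochner_Integration.integral_cong[OF refl])
      fix \<omega> assume "\<omega> \<in> space M"
      then have "0 \<le> X 0 1 \<omega>" by (rule Xnn)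
      then show "(if -1 < X 0 1 \<omega> then X 0 1 \<omega> else 0) = X 0 1 \<omega>" by simp
    qed
    then have e: "m * expectation (\<lambda>\<omega>. if -1 < X 0 1 \<omega> then X 0 1 \<omega> else 0) < r"
      using False unfolding m_def r_def muX_def by simp
    have q: "g < m * (1 - F (-1))" using Fm1 gl' by simp
    show ?thesis using e q unfolding m_def r_def q_eq F_def by blast
  qed
qed

end

theorem mainTheorem16:
  fixes M :: "'a measure"
    and D :: "nat \<Rightarrow> nat \<Rightarrow> 'a \<Rightarrow> nat"
    and X R :: "nat \<Rightarrow> nat \<Rightarrow> 'a \<Rightarrow> real"
    and \<tau> \<theta> :: real
  assumes H_std: "standing_setup M D X R"
    and A: "assumptions_A M D X R"
    and tau: "rR M R \<le> mD M D * muX M X \<Longrightarrow>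
       (\<integral>x. x * indicator {0..\<tau>} x \<partial>lawX M X) = rR M R / mD M D"
    and theta: "rR M R \<le> mD M D * muX M X \<Longrightarrow>
       (\<integral>x. x * indicator {\<theta>..supp_sup M X} x \<partial>lawX M X) = rR M R / mD M D"
  shows "\<forall>\<epsilon>>0. \<forall>\<delta>>0. \<exists>L>0.
    (reaches_all M (wf_proc D X R) \<and>
     mD M D * (if rR M R \<le> mD M D * muX M X then cdfX M X \<tau> else 1) > 1 \<longrightarrow>
       (\<forall>n. measure M {\<omega> \<in> space M. real (wf_proc D X R n \<omega>) \<ge> L} > 0 \<longrightarrow>
          measure M ({\<omega> \<in> space M. \<forall>l. ratio (wf_proc D X R (n + l + 1) \<omega>) (wf_proc D X R (n + l) \<omega>)
                 > mD M D * (if rR M R \<le> mD M D * muX M X then cdfX M X \<tau> else 1) - \<delta>}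
               \<inter> {\<omega> \<in> space M. real (wf_proc D X R n \<omega>) \<ge> L})
          / measure M {\<omega> \<in> space M. real (wf_proc D X R n \<omega>) \<ge> L} \<ge> 1 - \<epsilon>)) \<and>
    (reaches_all M (sf_proc D X R) \<and>
     mD M D * (if rR M R \<le> mD M D * muX M X then 1 - cdfX M X \<theta> else 1) > 1 \<longrightarrow>
       (\<forall>n. measure M {\<omega> \<in> space M. real (sf_proc D X R n \<omega>) \<ge> L} > 0 \<longrightarrow>
          measure M ({\<omega> \<in> space M. \<forall>l. ratio (sf_proc D X R (n + l + 1) \<omega>) (sf_proc D X R (n + l) \<omega>)
                 > mD M D * (if rR M R \<le> mD M D * muX M X then 1 - cdfX M X \<theta> else 1) - \<delta>}
               \<inter> {\<omega> \<in> space M. real (sf_proc D X R n \<omega>) \<ge> L})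
          / measure M {\<omega> \<in> space M. real (sf_proc D X R n \<omega>) \<ge> L} \<ge> 1 - \<epsilon>))"
proof -
  interpret gw M D X R by (rule gw.intro[OF H_std])
  show ?thesis unfolding wf_gproc sf_gproc
  proof (intro allI impI)
    fix \<epsilon> \<delta> :: real assume \<epsilon>: "0 < \<epsilon>" and \<delta>: "0 < \<delta>"
    define cw where "cw = (if rR M R \<le> mD M D * muX M X then cdfX M X \<tau> else 1)"
    define cs where "cs = (if rR M R \<le> mD M D * muX M X then 1 - cdfX M X \<theta> else 1)"
    have Pw: "\<exists>L0. \<forall>L\<ge>L0. 0 < L \<and> (1 < mD M D * cw \<longrightarrow>
       (\<forall>n. measure M {\<omega> \<in> space M. real (gproc Nsel D X R n \<omega>) \<ge> L} > 0 \<longrightarrow>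
          measure M ({\<omega> \<in> space M. \<forall>l. ratio (gproc Nsel D X R (n + l + 1) \<omega>) (gproc Nsel D X R (n + l) \<omega>)
                 > mD M D * cw - \<delta>} \<inter> {\<omega> \<in> space M. real (gproc Nsel D X R n \<omega>) \<ge> L})
          / measure M {\<omega> \<in> space M. real (gproc Nsel D X R n \<omega>) \<ge> L} \<ge> 1 - \<epsilon>))"
    proof (cases "1 < mD M D * cw")
      case True
      have ex: "\<exists>u. g < mD M D * expectation (\<lambda>\<omega>. if X 0 1 \<omega> \<le> u then 1 else 0) \<and>
          mD M D * expectation (\<lambda>\<omega>. if X 0 1 \<omega> \<le> u then X 0 1 \<omega> else 0) < rR M R"
        if "0 < g" "g < mD M D * cw" for g
        using ex_wf[OF A tau that(1) that(2)[unfolded cw_def]] .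
      have Qm: "{x::real. x \<le> u} \<in> sets borel" for u
      proof -
        have "{x::real. x \<le> u} = {..u}" by auto
        then show ?thesis using atMost_borel[of u] by simp
      qed
      have "\<exists>L0. \<forall>L\<ge>L0. 0 < L \<and> (\<forall>n. prob {\<omega>\<in>space M. L \<le> real (gproc Nsel D X R n \<omega>)} > 0 \<longrightarrow>
         prob ({\<omega>\<in>space M. \<forall>l. mD M D * cw - \<delta> < ratio (gproc Nsel D X R (n+l+1) \<omega>) (gproc Nsel D X R (n+l) \<omega>)}
               \<inter> {\<omega>\<in>space M. L \<le> real (gproc Nsel D X R n \<omega>)})
           / prob {\<omega>\<in>space M. L \<le> real (gproc Nsel D X R n \<omega>)} \<ge> 1 - \<epsilon>)"
        by (rule part[where sel=Nsel and Qf="\<lambda>u x. x \<le> u" and c=cw, OF _ Nsel_lb Qm A True \<delta> \<epsilon> ex]) simp_all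
      then show ?thesis by auto
    next
      case False
      show ?thesis using False by (intro exI[of _ 1]) auto
    qed
    have Ps: "\<exists>L0. \<forall>L\<ge>L0. 0 < L \<and> (1 < mD M D * cs \<longrightarrow>
       (\<forall>n. measure M {\<omega> \<in> space M. real (gproc Msel D X R n \<omega>) \<ge> L} > 0 \<longrightarrow>
          measure M ({\<omega> \<in> space M. \<forall>l. ratio (gproc Msel D X R (n + l + 1) \<omega>) (gproc Msel D X R (n + l) \<omega>)
                 > mD M D * cs - \<delta>} \<inter> {\<omega> \<in> space M. real (gproc Msel D X R n \<omega>) \<ge> L})
          / measure M {\<omega> \<in> space M. real (gproc Msel D X R n \<omega>) \<ge> L} \<ge> 1 - \<epsilon>))"
    proof (cases "1 < mD M D * cs")
      case True
      have ex: "\<exists>v. g < mD M D * expectation (\<lambda>\<omega>. if v < X 0 1 \<omega> then 1 else 0) \<and>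
          mD M D * expectation (\<lambda>\<omega>. if v < X 0 1 \<omega> then X 0 1 \<omega> else 0) < rR M R"
        if "0 < g" "g < mD M D * cs" for g
        using ex_sf[OF A theta that(1) that(2)[unfolded cs_def]] .
      have Qm: "{x::real. v < x} \<in> sets borel" for v
      proof -
        have "{x::real. v < x} = {v<..}" by auto
        then show ?thesis using greaterThan_borel[of v] by simp
      qed
      have "\<exists>L0. \<forall>L\<ge>L0. 0 < L \<and> (\<forall>n. prob {\<omega>\<in>space M. L \<le> real (gproc Msel D X R n \<omega>)} > 0 \<longrightarrow>
         prob ({\<omega>\<in>space M. \<forall>l. mD M D * cs - \<delta> < ratio (gproc Msel D X R (n+l+1) \<omega>) (gproc Msel D X R (n+l) \<omega>)}
               \<inter> {\<omega>\<in>space M. L \<le> real (gproc Msel D X R n \<omega>)})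
           / prob {\<omega>\<in>space M. L \<le> real (gproc Msel D X R n \<omega>)} \<ge> 1 - \<epsilon>)"
        by (rule part[where sel=Msel and Qf="\<lambda>v x. v < x" and c=cs, OF _ Msel_lb Qm A True \<delta> \<epsilon> ex]) simp_all
      then show ?thesis by auto
    next
      case False
      show ?thesis using False by (intro exI[of _ 1]) auto
    qed
    obtain Lw where Lw: "\<forall>L\<ge>Lw. 0 < L \<and> (1 < mD M D * cw \<longrightarrow>
       (\<forall>n. measure M {\<omega> \<in> space M. real (gproc Nsel D X R n \<omega>) \<ge> L} > 0 \<longrightarrow>
          measure M ({\<omega> \<in> space M. \<forall>l. ratio (gproc Nsel D X R (n + l + 1) \<omega>) (gproc Nsel D X R (n + l) \<omega>)
                 > mD M D * cw - \<delta>} \<inter> {\<omega> \<in> space M. real (gproc Nsel D X R n \<omega>) \<ge> L})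
          / measure M {\<omega> \<in> space M. real (gproc Nsel D X R n \<omega>) \<ge> L} \<ge> 1 - \<epsilon>))"
      using Pw by blast
    obtain Ls where Ls: "\<forall>L\<ge>Ls. 0 < L \<and> (1 < mD M D * cs \<longrightarrow>
       (\<forall>n. measure M {\<omega> \<in> space M. real (gproc Msel D X R n \<omega>) \<ge> L} > 0 \<longrightarrow>
          measure M ({\<omega> \<in> space M. \<forall>l. ratio (gproc Msel D X R (n + l + 1) \<omega>) (gproc Msel D X R (n + l) \<omega>)
                 > mD M D * cs - \<delta>} \<inter> {\<omega> \<in> space M. real (gproc Msel D X R n \<omega>) \<ge> L})
          / measure M {\<omega> \<in> space M. real (gproc Msel D X R n \<omega>) \<ge> L} \<ge> 1 - \<epsilon>))"
      using Ps by blast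
    define L where "L = max Lw Ls"
    have LwL: "Lw \<le> L" and LsL: "Ls \<le> L" unfolding L_def by simp_all
    have hw: "0 < L \<and> (1 < mD M D * cw \<longrightarrow>
       (\<forall>n. measure M {\<omega> \<in> space M. real (gproc Nsel D X R n \<omega>) \<ge> L} > 0 \<longrightarrow>
          measure M ({\<omega> \<in> space M. \<forall>l. ratio (gproc Nsel D X R (n + l + 1) \<omega>) (gproc Nsel D X R (n + l) \<omega>)
                 > mD M D * cw - \<delta>} \<inter> {\<omega> \<in> space M. real (gproc Nsel D X R n \<omega>) \<ge> L})
          / measure M {\<omega> \<in> space M. real (gproc Nsel D X R n \<omega>) \<ge> L} \<ge> 1 - \<epsilon>))"
      by (rule mp[OF spec[OF Lw, of L] LwL])
    have hs: "0 < L \<and> (1 < mD M D * cs \<longrightarrow>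
       (\<forall>n. measure M {\<omega> \<in> space M. real (gproc Msel D X R n \<omega>) \<ge> L} > 0 \<longrightarrow>
          measure M ({\<omega> \<in> space M. \<forall>l. ratio (gproc Msel D X R (n + l + 1) \<omega>) (gproc Msel D X R (n + l) \<omega>)
                 > mD M D * cs - \<delta>} \<inter> {\<omega> \<in> space M. real (gproc Msel D X R n \<omega>) \<ge> L})
          / measure M {\<omega> \<in> space M. real (gproc Msel D X R n \<omega>) \<ge> L} \<ge> 1 - \<epsilon>))"
      by (rule mp[OF spec[OF Ls, of L] LsL])
    show "\<exists>L>0.
    (reaches_all M (gproc Nsel D X R) \<and>
     mD M D * (if rR M R \<le> mD M D * muX M X then cdfX M X \<tau> else 1) > 1 \<longrightarrow>
       (\<forall>n. measure M {\<omega> \<in> space M. real (gproc Nsel D X R n \<omega>) \<ge> L} > 0 \<longrightarrow>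
          measure M ({\<omega> \<in> space M. \<forall>l. ratio (gproc Nsel D X R (n + l + 1) \<omega>) (gproc Nsel D X R (n + l) \<omega>)
                 > mD M D * (if rR M R \<le> mD M D * muX M X then cdfX M X \<tau> else 1) - \<delta>}
               \<inter> {\<omega> \<in> space M. real (gproc Nsel D X R n \<omega>) \<ge> L})
          / measure M {\<omega> \<in> space M. real (gproc Nsel D X R n \<omega>) \<ge> L} \<ge> 1 - \<epsilon>)) \<and>
    (reaches_all M (gproc Msel D X R) \<and>
     mD M D * (if rR M R \<le> mD M D * muX M X then 1 - cdfX M X \<theta> else 1) > 1 \<longrightarrow>
       (\<forall>n. measure M {\<omega> \<in> space M. real (gproc Msel D X R n \<omega>) \<ge> L} > 0 \<longrightarrow>
          measure M ({\<omega> \<in> space M. \<forall>l. ratio (gproc Msel D X R (n + l + 1) \<omega>) (gproc Msel D X R (n + l) \<omega>)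
                 > mD M D * (if rR M R \<le> mD M D * muX M X then 1 - cdfX M X \<theta> else 1) - \<delta>}
               \<inter> {\<omega> \<in> space M. real (gproc Msel D X R n \<omega>) \<ge> L})
          / measure M {\<omega> \<in> space M. real (gproc Msel D X R n \<omega>) \<ge> L} \<ge> 1 - \<epsilon>))"
      using hw hs unfolding cw_def cs_def by blast
  qed
qed


end
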